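(* Let $K\ge d>0$, $C\ge 1$, $T\ge 1$. Let $\Gamma,\tilde\Gamma\in\mathbb{R}^{K\times d}$ with $\mathrm{rank}(\Gamma)=\mathrm{rank}(\tilde\Gamma)=d$, and define $w_t=\Gamma s_t$, $\tilde w_t=\tilde\Gamma\tilde s_t$ for $1\le t\le T$, where $s,\tilde s\in\mathbb{R}^{T\times d}$ are switching linear Gaussian source processes as in the context. Assume $w=(w_t)_t$ and $\tilde w=(\tilde w_t)_t$ have the same distribution, that $\Sigma_{1,1}=\mathrm{Cov}(s_1,s_1)$ has positive diagonal entries, and that there exist $t_0\in\{1,\dots,T\}$ and $\ell_0\in\{0,\dots,t_0-1\}$ such that the diagonal entries of $\Sigma_{1,1}^{-1/2}\,\Sigma_{t_0,t_0-\ell_0}\,\Sigma_{1,1}^{-1/2}$ are pairwise distinct, where $\Sigma_{t,r}=\mathrm{Cov}(s_t,s_r)$. Then there exist a $d\times d$ permutation matrix $P$ and an invertible diagonal matrix $D$ such that $\tilde\Gamma=\Gamma P D^{-1}$.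
   Context: Switching linear Gaussian source process: for each $i\in\{1,\dots,d\}$, $(u_t^{(i)})_{1\le t\le T}$ is a Markov chain on $\{1,\dots,C\}$ with initial law $\pi^{(i)}$ and transition matrix $A^{(i)}$; conditionally on $u_1^{(i)}=k$, $s_1^{(i)}\sim\mathcal{N}(m_k^{(i)},\Phi_k^{(i)})$; conditionally on $\{s_t^{(i)}, u_{t+1}^{(i)}=k\}$ (and the past), $s_{t+1}^{(i)}\sim\mathcal{N}(B_k^{(i)}s_t^{(i)}+b_k^{(i)},\Psi_k^{(i)})$, where $B_k^{(i)}\ne0$ and $\Phi_k^{(i)},\Psi_k^{(i)}>0$. The collections $\big((u_t^{(i)})_t,(s_t^{(i)})_t\big)$ are mutually independent across $i$. The process $(\tilde u,\tilde s)$ is built in the same way with its own parameters $\tilde\pi^{(i)},\tilde A^{(i)},\tilde m_k^{(i)},\tilde\Phi_k^{(i)},\tilde B_k^{(i)},\tilde b_k^{(i)},\tilde\Psi_k^{(i)}$ (same $C$). *)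

theory Defs
  imports "HOL-Probability.Probability"
begin

text \<open>Parameters of a switching linear Gaussian source process with d components
  (indexed by the finite type 'd) and C regimes (indexed by 1..C).
  All scalar: for component i and regime k,
  init_law i k = pi^(i)_k, trans i k l = A^(i)_{k l} (from k to l),
  m i k, Phi i k (variance), B i k, b i k, Psi i k (variance).\<close>

record 'd slgp =
  init_law :: "'d \<Rightarrow> nat \<Rightarrow> real"
  trans    :: "'d \<Rightarrow> nat \<Rightarrow> nat \<Rightarrow> real"
  mean0    :: "'d \<Rightarrow> nat \<Rightarrow> real"
  var0     :: "'d \<Rightarrow> nat \<Rightarrow> real"
  coefB    :: "'d \<Rightarrow> nat \<Rightarrow> real"
  coefb    :: "'d \<Rightarrow> nat \<Rightarrow> real"
  varPsi   :: "'d \<Rightarrow> nat \<Rightarrow> real"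

definition valid_slgp :: "nat \<Rightarrow> 'd slgp \<Rightarrow> bool" where
  "valid_slgp C p \<longleftrightarrow>
     (\<forall>i. (\<forall>k\<in>{1..C}. init_law p i k \<ge> 0) \<and> (\<Sum>k=1..C. init_law p i k) = 1 \<and>
          (\<forall>k\<in>{1..C}. (\<forall>l\<in>{1..C}. trans p i k l \<ge> 0) \<and> (\<Sum>l=1..C. trans p i k l) = 1) \<and>
          (\<forall>k\<in>{1..C}. coefB p i k \<noteq> 0 \<and> var0 p i k > 0 \<and> varPsi p i k > 0))"

definition comp_density :: "nat \<Rightarrow> nat \<Rightarrow> 'd slgp \<Rightarrow> 'd \<Rightarrow> (nat \<Rightarrow> real) \<Rightarrow> real" where
  "comp_density C T p i x =
     (\<Sum>u\<in>PiE {1..T} (\<lambda>_. {1..C}).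
        (init_law p i (u 1) * (\<Prod>t\<in>{2..T}. trans p i (u (t - 1)) (u t))) *
        (normal_density (mean0 p i (u 1)) (sqrt (var0 p i (u 1))) (x 1) *
         (\<Prod>t\<in>{2..T}. normal_density (coefB p i (u t) * x (t - 1) + coefb p i (u t))
                                       (sqrt (varPsi p i (u t))) (x t))))"

definition source_law :: "nat \<Rightarrow> nat \<Rightarrow> ('d::finite) slgp \<Rightarrow> (nat \<Rightarrow> real^'d) measure" where
  "source_law C T p =
     density (PiM {1..T} (\<lambda>_. lborel))
             (\<lambda>s. ennreal (\<Prod>i\<in>UNIV. comp_density C T p i (\<lambda>t. s t $ i)))"

definition obs_law :: "nat \<Rightarrow> nat \<Rightarrow> real^'d^'k \<Rightarrow> ('d::finite) slgp \<Rightarrow> (nat \<Rightarrow> real^'k) measure" where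
  "obs_law C T G p =
     distr (source_law C T p) (PiM {1..T} (\<lambda>_. borel)) (\<lambda>s. \<lambda>t\<in>{1..T}. G *v s t)"

definition cov_mat :: "(nat \<Rightarrow> real^'d) measure \<Rightarrow> nat \<Rightarrow> nat \<Rightarrow> real^'d^'d" where
  "cov_mat M t r =
     (\<chi> i j. (\<integral>s. (s t $ i) * (s r $ j) \<partial>M) - (\<integral>s. s t $ i \<partial>M) * (\<integral>s. s r $ j \<partial>M))"

definition psd_sqrt :: "real^'n^'n \<Rightarrow> real^'n^'n" where
  "psd_sqrt A = (THE R. transpose R = R \<and> (\<forall>x. 0 \<le> x \<bullet> (R *v x)) \<and> R ** R = A)"

definition inv_sqrt :: "real^'n^'n \<Rightarrow> real^'n^'n" where
  "inv_sqrt A = matrix_inv (psd_sqrt A)"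

definition permutation_matrix :: "real^'n^'n \<Rightarrow> bool" where
  "permutation_matrix P \<longleftrightarrow> (\<exists>\<sigma>. \<sigma> permutes (UNIV::'n set) \<and>
      P = (\<chi> i j. if i = \<sigma> j then 1 else 0))"

definition diagonal_mat :: "real^'n^'n \<Rightarrow> bool" where
  "diagonal_mat D \<longleftrightarrow> (\<forall>i j. i \<noteq> j \<longrightarrow> D $ i $ j = 0)"

end

theory Submission
  imports Defs
begin

lemma diag_mult_entry:
  fixes S R :: "real^'n^'n"
  assumes "\<forall>i j. i \<noteq> j \<longrightarrow> S$i$j = 0"
  shows "(S ** R)$i$j = S$i$i * R$i$j" and "(R ** S)$i$j = R$i$j * S$j$j"
proof -
  have "(S ** R)$i$j = (\<Sum>k\<in>UNIV. S$i$k * R$k$j)" by (simp add: matrix_matrix_mult_def)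
  also have "\<dots> = S$i$i * R$i$j"
    by (subst sum.remove[of _ i]) (auto simp: assms)
  finally show "(S ** R)$i$j = S$i$i * R$i$j" .
  have "(R ** S)$i$j = (\<Sum>k\<in>UNIV. R$i$k * S$k$j)" by (simp add: matrix_matrix_mult_def)
  also have "\<dots> = R$i$j * S$j$j"
    by (subst sum.remove[of _ j]) (auto simp: assms)
  finally show "(R ** S)$i$j = R$i$j * S$j$j" .
qed

lemma mat_add_rdistrib: "((A::'a::semiring_1^'n^'m) + B) ** C = A ** C + B ** C"
  by (vector matrix_matrix_mult_def sum.distrib[symmetric] field_simps)

lemma mat_diff_ldistrib: "(A::'a::ring_1^'n^'m) ** (B - C) = A ** B - A ** C"
  by (vector matrix_matrix_mult_def sum_subtractf[symmetric] field_simps)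

lemma psd_sqrt_diag:
  fixes S :: "real^'n^'n"
  assumes diag: "\<forall>i j. i \<noteq> j \<longrightarrow> S$i$j = 0" and pos: "\<forall>i. S$i$i > 0"
  shows "psd_sqrt S = (\<chi> i j. if i = j then sqrt (S$i$i) else 0)"
proof -
  define Q :: "real^'n^'n" where "Q = (\<chi> i j. if i = j then sqrt (S$i$i) else 0)"
  have Qd: "\<forall>i j. i \<noteq> j \<longrightarrow> Q$i$j = 0" by (simp add: Q_def)
  have QQ: "Q ** Q = S"
    by (simp add: vec_eq_iff diag_mult_entry[OF Qd]) (auto simp: Q_def diag less_imp_le[OF pos[rule_format]])
  have Qv: "(Q *v x)$i = sqrt (S$i$i) * x$i" for x i
    unfolding matrix_vector_mult_def Q_def by (simp add: if_distrib[where f="\<lambda>a. a * _"] cong: if_cong)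
  have Qx: "x \<bullet> (Q *v x) = (\<Sum>i\<in>UNIV. sqrt (S$i$i) * (x$i)^2)" for x
    by (simp add: inner_vec_def Qv power2_eq_square algebra_simps)
  have Qpsd: "0 \<le> x \<bullet> (Q *v x)" for x
    unfolding Qx using pos by (intro sum_nonneg) (simp add: less_imp_le)
  have Qt: "transpose Q = Q" by (simp add: vec_eq_iff transpose_def Q_def)
  have uniq: "R = Q" if R: "\<forall>x. 0 \<le> x \<bullet> (R *v x)" "R ** R = S" for R
  proof -
    have "R ** S = S ** R" using R(2) by (metis matrix_mul_assoc)
    then have c: "R$i$j * S$j$j = S$i$i * R$i$j" for i j
      by (metis diag_mult_entry[OF diag] vec_eq_iff)
    have RQ: "R ** Q = Q ** R"
    proof -
      have "R$i$j * Q$j$j = Q$i$i * R$i$j" for i j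
      proof (cases "R$i$j = 0")
        case False
        with c[of i j] have "S$j$j = S$i$i" by (simp add: mult.commute)
        then show ?thesis by (simp add: Q_def)
      qed simp
      then show ?thesis by (simp add: vec_eq_iff diag_mult_entry[OF Qd])
    qed
    have zero: "(R + Q) ** (R - Q) = 0"
      by (simp add: mat_add_rdistrib mat_diff_ldistrib RQ QQ R(2))
    have "(R - Q) *v v = 0" for v
    proof -
      define w where "w = (R - Q) *v v"
      have "(R + Q) *v w = 0" unfolding w_def using zero
        by (metis matrix_vector_mul_assoc matrix_vector_mult_0)
      then have "w \<bullet> (R *v w) + w \<bullet> (Q *v w) = 0"
        by (metis matrix_vector_mult_add_rdistrib inner_add_right inner_zero_right)
      with R(1) Qpsd have "w \<bullet> (Q *v w) = 0" by (smt (verit))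
      moreover note Qx[of w]
      ultimately have "(\<Sum>i\<in>UNIV. sqrt (S$i$i) * (w$i)^2) = 0" by simp
      then have "\<forall>i\<in>UNIV. sqrt (S$i$i) * (w$i)^2 = 0"
        using pos by (subst sum_nonneg_eq_0_iff[symmetric]) (auto simp: less_imp_le)
      then have "w$i = 0" for i using pos[rule_format, of i] by (metis UNIV_I mult_eq_0_iff power_eq_0_iff real_sqrt_eq_zero_cancel_iff less_irrefl)
      then show ?thesis unfolding w_def by (simp add: vec_eq_iff)
    qed
    then show "R = Q" by (metis matrix_eq matrix_vector_mult_0 eq_iff_diff_eq_0 matrix_vector_mult_diff_rdistrib)
  qed
  show ?thesis unfolding psd_sqrt_def Q_def[symmetric]
    by (rule the_equality) (use Qt Qpsd QQ uniq in auto)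
qed

lemma matrix_inv_eqI:
  fixes A B :: "real^'n^'n"
  assumes "A ** B = mat 1" "B ** A = mat 1"
  shows "matrix_inv A = B"
  unfolding matrix_inv_def
proof (rule someI2[of _ B])
  show "A ** B = mat 1 \<and> B ** A = mat 1" using assms by simp
  fix A' assume "A ** A' = mat 1 \<and> A' ** A = mat 1"
  then have "A' = A' ** (A ** B)" "A' ** A = mat 1" using assms by auto
  then show "A' = B" by (metis matrix_mul_assoc matrix_mul_lid)
qed

lemma entry_mult_zero_col:
  fixes X Y :: "real^'n^'n"
  assumes "\<forall>k. Y$k$j = 0"
  shows "(X ** Y)$i$j = 0"
  using assms by (simp add: matrix_matrix_mult_def)

lemma entry_mult_zero_row:
  fixes X Y :: "real^'n^'n"
  assumes "\<forall>k. X$i$k = 0"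
  shows "(X ** Y)$i$j = 0"
  using assms by (simp add: matrix_matrix_mult_def)

lemma monomial_core:
  fixes G Gt :: "real^'d^'k" and S L St Lt :: "real^'d^'d"
  assumes rG: "rank G = CARD('d)" and rGt: "rank Gt = CARD('d)"
    and dS: "\<forall>i j. i \<noteq> j \<longrightarrow> S$i$j = 0" and dL: "\<forall>i j. i \<noteq> j \<longrightarrow> L$i$j = 0"
    and dSt: "\<forall>i j. i \<noteq> j \<longrightarrow> St$i$j = 0" and dLt: "\<forall>i j. i \<noteq> j \<longrightarrow> Lt$i$j = 0"
    and pos: "\<forall>i. S$i$i > 0"
    and injl: "inj (\<lambda>i. L$i$i / S$i$i)"
    and eqS: "G ** S ** transpose G = Gt ** St ** transpose Gt"
    and eqL: "G ** L ** transpose G = Gt ** Lt ** transpose Gt"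
  shows "\<exists>P D :: real^'d^'d. permutation_matrix P \<and> diagonal_mat D \<and> invertible D \<and>
           Gt = G ** P ** matrix_inv D"
proof -
  obtain H :: "real^'k^'d" where H: "H ** G = mat 1"
    using rG by (metis full_rank_injective matrix_left_invertible_injective)
  obtain Ht :: "real^'k^'d" where Ht: "Ht ** Gt = mat 1"
    using rGt by (metis full_rank_injective matrix_left_invertible_injective)
  define A where "A = H ** Gt"
  define Sinv :: "real^'d^'d" where "Sinv = (\<chi> i j. if i = j then 1 / S$i$i else 0)"
  have SSinv: "S ** Sinv = mat 1"
    using pos by (simp add: vec_eq_iff diag_mult_entry[OF dS] Sinv_def mat_def) (metis less_irrefl)
  have HGT: "transpose G ** transpose H = mat 1"
    by (metis H matrix_transpose_mul transpose_mat)
  have S_eq: "A ** St ** transpose A = S"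
  proof -
    have "H ** (G ** S ** transpose G) ** transpose H = S"
      by (metis H HGT matrix_mul_assoc matrix_mul_lid matrix_mul_rid)
    also note eqS
    finally show ?thesis unfolding A_def by (simp add: matrix_transpose_mul matrix_mul_assoc)
  qed
  have "A ** (St ** transpose A ** Sinv) = mat 1"
    using S_eq SSinv by (simp add: matrix_mul_assoc)
  then obtain Ai where AAi: "A ** Ai = mat 1" and AiA: "Ai ** A = mat 1"
    by (metis invertible_def invertible_right_inverse)
  have AiT: "transpose A ** transpose Ai = mat 1" "transpose Ai ** transpose A = mat 1"
    by (metis AiA AAi matrix_transpose_mul transpose_mat)+
  have St_eq: "St = Ai ** S ** transpose Ai"
  proof -
    have "Ai ** (A ** St ** transpose A) ** transpose Ai = St"
      by (metis AiA AiT(1) matrix_mul_assoc matrix_mul_lid matrix_mul_rid)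
    then show ?thesis using S_eq by simp
  qed
  define StI where "StI = transpose A ** Sinv ** A"
  have StStI: "St ** StI = mat 1"
  proof -
    have "St ** StI = Ai ** S ** (transpose Ai ** transpose A) ** Sinv ** A"
      unfolding St_eq StI_def by (simp add: matrix_mul_assoc)
    also have "\<dots> = Ai ** S ** Sinv ** A" using AiT(2) by simp
    also have "\<dots> = Ai ** (S ** Sinv) ** A" by (simp add: matrix_mul_assoc)
    also have "\<dots> = Ai ** A" using SSinv by simp
    finally show ?thesis using AiA by simp
  qed
  have GtA: "Gt = G ** A"
  proof -
    have "Gt = Gt ** St ** transpose Gt ** transpose Ht ** StI"
    proof -
      have "transpose Gt ** transpose Ht = mat 1" by (metis Ht matrix_transpose_mul transpose_mat)
      then have "Gt ** St ** transpose Gt ** transpose Ht ** StI = Gt ** (St ** StI)"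
        by (metis matrix_mul_assoc matrix_mul_rid)
      then show ?thesis using StStI by simp
    qed
    also have "\<dots> = G ** (S ** transpose G ** transpose Ht ** StI)"
      using eqS by (simp add: matrix_mul_assoc)
    finally have e: "Gt = G ** (S ** transpose G ** transpose Ht ** StI)" .
    then have "A = S ** transpose G ** transpose Ht ** StI"
      unfolding A_def using H by (metis matrix_mul_assoc matrix_mul_lid)
    with e show ?thesis by simp
  qed
  have L_eq: "A ** Lt ** transpose A = L"
  proof -
    have "H ** (G ** L ** transpose G) ** transpose H = L"
      by (metis H HGT matrix_mul_assoc matrix_mul_lid matrix_mul_rid)
    also note eqL
    finally show ?thesis unfolding A_def by (simp add: matrix_transpose_mul matrix_mul_assoc)
  qed
  define B where "B = transpose Ai"
  have SB: "S ** B = A ** St"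
    unfolding B_def using S_eq[symmetric] AiT by (simp add: matrix_mul_assoc[symmetric])
  have LB: "L ** B = A ** Lt"
    unfolding B_def using L_eq[symmetric] AiT by (simp add: matrix_mul_assoc[symmetric])
  have e1: "S$i$i * B$i$j = A$i$j * St$j$j" for i j
    using SB by (metis diag_mult_entry(1)[OF dS] diag_mult_entry(2)[OF dSt])
  have e2: "L$i$i * B$i$j = A$i$j * Lt$j$j" for i j
    using LB by (metis diag_mult_entry(1)[OF dL] diag_mult_entry(2)[OF dLt])
  have Stnz: "St$j$j \<noteq> 0" for j
  proof
    assume "St$j$j = 0"
    then have "\<forall>k. B$k$j = 0" using e1 pos by (metis mult_eq_0_iff mult_zero_right less_irrefl)
    then have "(transpose A ** B)$j$j = 0" by (rule entry_mult_zero_col)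
    then show False using AiT(1) unfolding B_def by (simp add: mat_def)
  qed
  have lam: "L$i$i / S$i$i = Lt$j$j / St$j$j" if "A$i$j \<noteq> 0" for i j
  proof -
    have "B$i$j = A$i$j * St$j$j / S$i$i" using e1[of i j] pos[rule_format, of i]
      by (simp add: field_simps)
    with e2[of i j] have "L$i$i * (A$i$j * St$j$j / S$i$i) = A$i$j * Lt$j$j" by simp
    then show ?thesis using that Stnz[of j] pos[rule_format, of i] by (simp add: field_simps)
  qed
  have uniq: "i = i'" if "A$i$j \<noteq> 0" "A$i'$j \<noteq> 0" for i i' j
  proof -
    have "L$i$i/S$i$i = L$i'$i'/S$i'$i'" using lam[OF that(1)] lam[OF that(2)] by simp
    then show ?thesis using injl unfolding inj_def by blast
  qed
  have col: "\<exists>i. A$i$j \<noteq> 0" for j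
  proof (rule ccontr)
    assume "\<not> ?thesis"
    then have "(Ai ** A)$j$j = 0" by (intro entry_mult_zero_col) auto
    then show False using AiA by (simp add: mat_def)
  qed
  have row: "\<exists>j. A$i$j \<noteq> 0" for i
  proof (rule ccontr)
    assume "\<not> ?thesis"
    then have "(A ** Ai)$i$i = 0" by (intro entry_mult_zero_row) auto
    then show False using AAi by (simp add: mat_def)
  qed
  define \<sigma> where "\<sigma> j = (SOME i. A$i$j \<noteq> 0)" for j
  have \<sigma>1: "A$(\<sigma> j)$j \<noteq> 0" for j unfolding \<sigma>_def by (rule someI_ex[OF col])
  have \<sigma>2: "A$i$j \<noteq> 0 \<longleftrightarrow> i = \<sigma> j" for i j using \<sigma>1[of j] uniq[of i j "\<sigma> j"] by blast
  have "surj \<sigma>" unfolding surj_def using row \<sigma>2 by blast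
  then have "bij \<sigma>" by (simp add: bij_def finite_UNIV_surj_inj)
  then have perm: "\<sigma> permutes UNIV" by (rule bij_imp_permutes) simp
  define P :: "real^'d^'d" where "P = (\<chi> i j. if i = \<sigma> j then 1 else 0)"
  define D :: "real^'d^'d" where "D = (\<chi> i j. if i = j then 1 / A$(\<sigma> j)$j else 0)"
  define Di :: "real^'d^'d" where "Di = (\<chi> i j. if i = j then A$(\<sigma> j)$j else 0)"
  have dD: "\<forall>i j. i \<noteq> j \<longrightarrow> D$i$j = 0" by (simp add: D_def)
  have DDi: "D ** Di = mat 1" "Di ** D = mat 1"
    using \<sigma>1 unfolding vec_eq_iff diag_mult_entry(1)[OF dD] diag_mult_entry(2)[OF dD]
    by (simp_all add: D_def Di_def mat_def)
  have invD: "invertible D" using DDi unfolding invertible_def by blast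
  have mD: "matrix_inv D = Di" by (rule matrix_inv_eqI) (use DDi in auto)
  have dDi: "\<forall>i j. i \<noteq> j \<longrightarrow> Di$i$j = 0" by (simp add: Di_def)
  have PDi: "P ** Di = A"
  proof -
    have "(P ** Di)$i$j = A$i$j" for i j
      using \<sigma>2[of i j] unfolding diag_mult_entry(2)[OF dDi] by (auto simp: P_def Di_def)
    then show ?thesis by (simp add: vec_eq_iff)
  qed
  have "permutation_matrix P" unfolding permutation_matrix_def P_def using perm by blast
  moreover have "diagonal_mat D" unfolding diagonal_mat_def using dD by blast
  moreover have "Gt = G ** P ** matrix_inv D"
    using GtA PDi mD by (metis matrix_mul_assoc)
  ultimately show ?thesis using invD by blast
qed

lemma normal_nn_int:
  assumes "0 < \<sigma>"
  shows "(\<integral>\<^sup>+y. ennreal (normal_density \<mu> \<sigma> y) \<partial>lborel) = 1"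
  using assms by (subst nn_integral_eq_integral) auto

lemma normal_second_moment:
  assumes s: "0 < \<sigma>"
  shows "has_bochner_integral lborel (\<lambda>y. normal_density \<mu> \<sigma> y * y^2) (\<sigma>^2 + \<mu>^2)"
proof -
  have a: "has_bochner_integral lborel (\<lambda>y. normal_density \<mu> \<sigma> y * (y - \<mu>)^2) (\<sigma>^2)"
    using normal_moment_even[OF s, of \<mu> 1] by (simp add: power2_eq_square)
  have b: "has_bochner_integral lborel (\<lambda>y. normal_density \<mu> \<sigma> y * (y - \<mu>)) 0"
    using normal_moment_odd[OF s, of \<mu> 0] by simp
  have c: "has_bochner_integral lborel (\<lambda>y. normal_density \<mu> \<sigma> y) 1"
    using s by (simp add: has_bochner_integral_iff)
  have "has_bochner_integral lborel (\<lambda>y. normal_density \<mu> \<sigma> y * (y - \<mu>)^2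
      + 2 * \<mu> * (normal_density \<mu> \<sigma> y * (y - \<mu>)) + \<mu>^2 * normal_density \<mu> \<sigma> y) (\<sigma>^2 + 2 * \<mu> * 0 + \<mu>^2 * 1)"
    by (intro has_bochner_integral_add has_bochner_integral_mult_right a b c)
  moreover have "(\<lambda>y. normal_density \<mu> \<sigma> y * (y - \<mu>)^2
      + 2 * \<mu> * (normal_density \<mu> \<sigma> y * (y - \<mu>)) + \<mu>^2 * normal_density \<mu> \<sigma> y) = (\<lambda>y. normal_density \<mu> \<sigma> y * y^2)"
    by (auto simp: fun_eq_iff power2_eq_square algebra_simps)
  ultimately show ?thesis by simp
qed

lemma normal_nn_moment2:
  assumes "0 < \<sigma>"
  shows "(\<integral>\<^sup>+y. ennreal (normal_density \<mu> \<sigma> y * y^2) \<partial>lborel) = ennreal (\<sigma>^2 + \<mu>^2)"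
  using normal_second_moment[OF assms]
  by (subst nn_integral_eq_integral) (auto simp: has_bochner_integral_iff)

lemma sum_PiE_insert:
  assumes "a \<notin> I" "finite I" "finite (B a)" "\<And>i. i \<in> I \<Longrightarrow> finite (B i)"
  shows "(\<Sum>g\<in>PiE (insert a I) B. F g) = (\<Sum>g\<in>PiE I B. \<Sum>y\<in>B a. F (g(a := y)))"
proof -
  have "(\<Sum>g\<in>PiE (insert a I) B. F g) = (\<Sum>(y,g)\<in>B a \<times> PiE I B. F (g(a := y)))"
    using assms
    by (intro sum.reindex_bij_witness[of _ "\<lambda>(y,g). g(a := y)" "\<lambda>g. (g a, g(a := undefined))"])
       (auto simp: PiE_def extensional_def)
  also have "\<dots> = (\<Sum>y\<in>B a. \<Sum>g\<in>PiE I B. F (g(a := y)))"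
    by (subst sum.cartesian_product) auto
  also have "\<dots> = (\<Sum>g\<in>PiE I B. \<Sum>y\<in>B a. F (g(a := y)))"
    by (rule sum.swap)
  finally show ?thesis .
qed

definition wt :: "'d slgp \<Rightarrow> 'd \<Rightarrow> (nat \<Rightarrow> nat) \<Rightarrow> nat \<Rightarrow> real" where
  "wt p i u n = init_law p i (u 1) * (\<Prod>t\<in>{2..n}. trans p i (u (t - 1)) (u t))"

definition chain :: "'d slgp \<Rightarrow> 'd \<Rightarrow> (nat \<Rightarrow> nat) \<Rightarrow> nat \<Rightarrow> (nat \<Rightarrow> real) \<Rightarrow> real" where
  "chain p i u n x = normal_density (mean0 p i (u 1)) (sqrt (var0 p i (u 1))) (x 1) *
         (\<Prod>t\<in>{2..n}. normal_density (coefB p i (u t) * x (t - 1) + coefb p i (u t))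
                                       (sqrt (varPsi p i (u t))) (x t))"

lemma comp_density_eq:
  "comp_density C T p i x = (\<Sum>u\<in>PiE {1..T} (\<lambda>_. {1..C}). wt p i u T * chain p i u T x)"
  unfolding comp_density_def wt_def chain_def ..

lemma wt_nonneg:
  assumes "valid_slgp C p" "\<forall>t\<in>{1..n}. u t \<in> {1..C}" "n \<ge> 1"
  shows "wt p i u n \<ge> 0"
proof -
  have "\<forall>t\<in>{2..n}. trans p i (u (t - 1)) (u t) \<ge> 0"
  proof
    fix t assume "t \<in> {2..n}"
    then have "t - 1 \<in> {1..n}" "t \<in> {1..n}" by auto
    then have "u (t - 1) \<in> {1..C}" "u t \<in> {1..C}" using assms(2) by blast+
    then show "trans p i (u (t - 1)) (u t) \<ge> 0" using assms(1) unfolding valid_slgp_def by blast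
  qed
  moreover have "init_law p i (u 1) \<ge> 0" using assms unfolding valid_slgp_def by auto
  ultimately show ?thesis unfolding wt_def by (intro mult_nonneg_nonneg prod_nonneg) auto
qed

lemma wt_sum:
  assumes v: "valid_slgp C p" and n: "n \<ge> 1"
  shows "(\<Sum>u\<in>PiE {1..n} (\<lambda>_. {1..C}). wt p i u n) = 1"
  using n
proof (induction n rule: dec_induct)
  case base
  have "(\<Sum>u\<in>PiE {1..1} (\<lambda>_. {1..C}). wt p i u 1) = (\<Sum>u\<in>PiE (insert 1 {}) (\<lambda>_. {1..C}). wt p i u 1)"
    by simp
  also have "\<dots> = (\<Sum>y\<in>{1..C}. init_law p i y)"
    by (subst sum_PiE_insert) (auto simp: wt_def)
  also have "\<dots> = 1" using v unfolding valid_slgp_def by blast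
  finally show ?case .
next
  case (step n)
  have ins: "{1..Suc n} = insert (Suc n) {1..n}" by auto
  have "(\<Sum>u\<in>PiE {1..Suc n} (\<lambda>_. {1..C}). wt p i u (Suc n))
      = (\<Sum>u\<in>PiE {1..n} (\<lambda>_. {1..C}). \<Sum>y\<in>{1..C}. wt p i (u(Suc n := y)) (Suc n))"
    unfolding ins by (subst sum_PiE_insert) auto
  also have "\<dots> = (\<Sum>u\<in>PiE {1..n} (\<lambda>_. {1..C}). wt p i u n * (\<Sum>y\<in>{1..C}. trans p i (u n) y))"
  proof (intro sum.cong refl)
    fix u assume u: "u \<in> PiE {1..n} (\<lambda>_. {1..C})"
    have "wt p i (u(Suc n := y)) (Suc n) = wt p i u n * trans p i (u n) y" for y
    proof -
      have i2: "{2..Suc n} = insert (Suc n) {2..n}" using step by auto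
      have "(\<Prod>t\<in>{2..n}. trans p i ((u(Suc n := y)) (t - 1)) ((u(Suc n := y)) t)) =
            (\<Prod>t\<in>{2..n}. trans p i (u (t - 1)) (u t))"
        by (intro prod.cong refl) auto
      then show ?thesis using step unfolding wt_def i2 by (simp add: algebra_simps)
    qed
    then show "(\<Sum>y\<in>{1..C}. wt p i (u(Suc n := y)) (Suc n)) = wt p i u n * (\<Sum>y\<in>{1..C}. trans p i (u n) y)"
      by (simp add: sum_distrib_left)
  qed
  also have "\<dots> = (\<Sum>u\<in>PiE {1..n} (\<lambda>_. {1..C}). wt p i u n)"
  proof (intro sum.cong refl)
    fix u assume u: "u \<in> PiE {1..n} (\<lambda>_. {1..C})"
    then have "u n \<in> {1..C}" using step by auto
    then have "(\<Sum>y\<in>{1..C}. trans p i (u n) y) = 1" using v unfolding valid_slgp_def by blast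
    then show "wt p i u n * (\<Sum>y\<in>{1..C}. trans p i (u n) y) = wt p i u n" by simp
  qed
  also have "\<dots> = 1" by (rule step.IH)
  finally show ?case .
qed

lemma chain_nonneg: "chain p i u n x \<ge> 0"
  unfolding chain_def by (intro mult_nonneg_nonneg prod_nonneg) auto

lemma comp_meas:
  "t \<in> I \<Longrightarrow> (\<lambda>x. x t) \<in> borel_measurable (PiM I (\<lambda>_. lborel::real measure))"
  by simp

lemma chain_meas:
  assumes "1 \<le> m" "n \<le> m"
  shows "chain p i u n \<in> borel_measurable (PiM {1..m} (\<lambda>_. lborel::real measure))"
proof -
  have c1: "(\<lambda>x. x 1) \<in> borel_measurable (PiM {1..m} (\<lambda>_. lborel::real measure))"
    using assms by (intro comp_meas) auto
  have c2: "(\<lambda>x. normal_density (coefB p i (u t) * x (t - 1) + coefb p i (u t))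
                                       (sqrt (varPsi p i (u t))) (x t)) \<in> borel_measurable (PiM {1..m} (\<lambda>_. lborel::real measure))"
    if "t \<in> {2..n}" for t
  proof -
    have [measurable]: "(\<lambda>x. x (t - 1)) \<in> borel_measurable (PiM {1..m} (\<lambda>_. lborel::real measure))"
      "(\<lambda>x. x t) \<in> borel_measurable (PiM {1..m} (\<lambda>_. lborel::real measure))"
      using that assms by (intro comp_meas; auto)+
    show ?thesis unfolding normal_density_def by measurable
  qed
  show ?thesis unfolding chain_def
    by (intro borel_measurable_times borel_measurable_prod c2 measurable_compose[OF c1]) auto
qed

lemma chain_upd:
  assumes "n \<ge> 1"
  shows "chain p i u (Suc n) (x(Suc n := y)) = chain p i u n x *
     normal_density (coefB p i (u (Suc n)) * x n + coefb p i (u (Suc n))) (sqrt (varPsi p i (u (Suc n)))) y"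
proof -
  have i2: "{2..Suc n} = insert (Suc n) {2..n}" using assms by auto
  have "(\<Prod>t\<in>{2..n}. normal_density (coefB p i (u t) * (x(Suc n := y)) (t - 1) + coefb p i (u t))
                                       (sqrt (varPsi p i (u t))) ((x(Suc n := y)) t)) =
        (\<Prod>t\<in>{2..n}. normal_density (coefB p i (u t) * x (t - 1) + coefb p i (u t))
                                       (sqrt (varPsi p i (u t))) (x t))"
    by (intro prod.cong refl) auto
  then show ?thesis using assms unfolding chain_def i2 by (simp add: algebra_simps)
qed

lemma chain_int:
  assumes v: "valid_slgp C p" and n: "n \<ge> 1"
  shows "(\<forall>t\<in>{1..n}. u t \<in> {1..C}) \<longrightarrow>
    (\<integral>\<^sup>+x. ennreal (chain p i u n x) \<partial>PiM {1..n} (\<lambda>_. lborel)) = 1 \<and>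
    (\<forall>k\<in>{1..n}. (\<integral>\<^sup>+x. ennreal (chain p i u n x * (x k)^2) \<partial>PiM {1..n} (\<lambda>_. lborel)) < \<infinity>)"
  using n
proof (induction n rule: dec_induct)
  interpret product_sigma_finite "\<lambda>_::nat. lborel::real measure" by standard
  case base
  show ?case
  proof
    assume u: "\<forall>t\<in>{1..1}. u t \<in> {1..C}"
    then have s: "0 < sqrt (var0 p i (u 1))" using v unfolding valid_slgp_def by auto
    have ch: "chain p i u 1 x = normal_density (mean0 p i (u 1)) (sqrt (var0 p i (u 1))) (x 1)" for x
      by (simp add: chain_def)
    have "(\<integral>\<^sup>+x. ennreal (chain p i u 1 x) \<partial>PiM {1} (\<lambda>_. lborel)) =
          (\<integral>\<^sup>+y. ennreal (normal_density (mean0 p i (u 1)) (sqrt (var0 p i (u 1))) y) \<partial>lborel)"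
      unfolding ch by (rule product_nn_integral_singleton) simp
    also have "\<dots> = 1" by (rule normal_nn_int[OF s])
    finally have 1: "(\<integral>\<^sup>+x. ennreal (chain p i u 1 x) \<partial>PiM {1..1} (\<lambda>_. lborel)) = 1" by simp
    have "(\<integral>\<^sup>+x. ennreal (chain p i u 1 x * (x 1)^2) \<partial>PiM {1} (\<lambda>_. lborel)) =
          (\<integral>\<^sup>+y. ennreal (normal_density (mean0 p i (u 1)) (sqrt (var0 p i (u 1))) y * y^2) \<partial>lborel)"
      unfolding ch by (rule product_nn_integral_singleton) simp
    also have "\<dots> < \<infinity>" unfolding normal_nn_moment2[OF s] by simp
    finally have 2: "\<forall>k\<in>{1..1}. (\<integral>\<^sup>+x. ennreal (chain p i u 1 x * (x k)^2) \<partial>PiM {1..1} (\<lambda>_. lborel)) < \<infinity>"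
      by simp
    from 1 2 show "(\<integral>\<^sup>+x. ennreal (chain p i u 1 x) \<partial>PiM {1..1} (\<lambda>_. lborel)) = 1 \<and>
      (\<forall>k\<in>{1..1}. (\<integral>\<^sup>+x. ennreal (chain p i u 1 x * (x k)^2) \<partial>PiM {1..1} (\<lambda>_. lborel)) < \<infinity>)" ..
  qed
next
  interpret product_sigma_finite "\<lambda>_::nat. lborel::real measure" by standard
  case (step n)
  show ?case
  proof
    assume u: "\<forall>t\<in>{1..Suc n}. u t \<in> {1..C}"
    then have IH: "(\<integral>\<^sup>+x. ennreal (chain p i u n x) \<partial>PiM {1..n} (\<lambda>_. lborel)) = 1"
      "\<And>k. k \<in> {1..n} \<Longrightarrow> (\<integral>\<^sup>+x. ennreal (chain p i u n x * (x k)^2) \<partial>PiM {1..n} (\<lambda>_. lborel)) < \<infinity>"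
      using step.IH by auto
    have s: "0 < sqrt (varPsi p i (u (Suc n)))" using u v unfolding valid_slgp_def by auto
    define \<mu> where "\<mu> x = coefB p i (u (Suc n)) * x n + coefb p i (u (Suc n))" for x :: "nat \<Rightarrow> real"
    define \<sigma> where "\<sigma> = sqrt (varPsi p i (u (Suc n)))"
    have sp: "0 < \<sigma>" using s by (simp add: \<sigma>_def)
    have ins: "{1..Suc n} = insert (Suc n) {1..n}" by auto
    have upd: "chain p i u (Suc n) (x(Suc n := y)) = chain p i u n x * normal_density (\<mu> x) \<sigma> y" for x y
      unfolding \<mu>_def \<sigma>_def by (rule chain_upd[OF step.hyps(1)])
    have mS: "chain p i u (Suc n) \<in> borel_measurable (PiM (insert (Suc n) {1..n}) (\<lambda>_. lborel::real measure))"
      unfolding ins[symmetric] by (rule chain_meas) auto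
    have mn: "chain p i u n \<in> borel_measurable (PiM {1..n} (\<lambda>_. lborel::real measure))"
      using step.hyps(1) by (intro chain_meas) auto
    have gen: "(\<integral>\<^sup>+x. ennreal (chain p i u (Suc n) x * h x) \<partial>PiM {1..Suc n} (\<lambda>_. lborel)) =
        (\<integral>\<^sup>+x. (\<integral>\<^sup>+y. ennreal (chain p i u n x * normal_density (\<mu> x) \<sigma> y * h (x(Suc n := y))) \<partial>lborel) \<partial>PiM {1..n} (\<lambda>_. lborel))"
      if hm: "h \<in> borel_measurable (PiM (insert (Suc n) {1..n}) (\<lambda>_. lborel::real measure))" for h
      unfolding ins
      by (subst product_nn_integral_insert) (use mS hm upd in auto)
    have "(\<integral>\<^sup>+x. ennreal (chain p i u (Suc n) x) \<partial>PiM {1..Suc n} (\<lambda>_. lborel)) =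
        (\<integral>\<^sup>+x. (\<integral>\<^sup>+y. ennreal (chain p i u n x * normal_density (\<mu> x) \<sigma> y * 1) \<partial>lborel) \<partial>PiM {1..n} (\<lambda>_. lborel))"
      using gen[of "\<lambda>_. 1"] by simp
    also have "\<dots> = (\<integral>\<^sup>+x. ennreal (chain p i u n x) \<partial>PiM {1..n} (\<lambda>_. lborel))"
    proof (intro nn_integral_cong)
      fix x
      have "(\<integral>\<^sup>+y. ennreal (chain p i u n x * normal_density (\<mu> x) \<sigma> y * 1) \<partial>lborel)
          = (\<integral>\<^sup>+y. ennreal (chain p i u n x) * ennreal (normal_density (\<mu> x) \<sigma> y) \<partial>lborel)"
        by (simp add: ennreal_mult chain_nonneg)
      also have "\<dots> = ennreal (chain p i u n x) * (\<integral>\<^sup>+y. ennreal (normal_density (\<mu> x) \<sigma> y) \<partial>lborel)"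
        by (rule nn_integral_cmult) simp
      also have "\<dots> = ennreal (chain p i u n x)" using normal_nn_int[OF sp] by simp
      finally show "(\<integral>\<^sup>+y. ennreal (chain p i u n x * normal_density (\<mu> x) \<sigma> y * 1) \<partial>lborel) = ennreal (chain p i u n x)" .
    qed
    also have "\<dots> = 1" by (rule IH(1))
    finally have 1: "(\<integral>\<^sup>+x. ennreal (chain p i u (Suc n) x) \<partial>PiM {1..Suc n} (\<lambda>_. lborel)) = 1" .
    have 2: "(\<integral>\<^sup>+x. ennreal (chain p i u (Suc n) x * (x k)^2) \<partial>PiM {1..Suc n} (\<lambda>_. lborel)) < \<infinity>"
      if k: "k \<in> {1..Suc n}" for k
    proof (cases "k = Suc n")
      case False
      then have k': "k \<in> {1..n}" using k by auto
      have "(\<integral>\<^sup>+x. ennreal (chain p i u (Suc n) x * (x k)^2) \<partial>PiM {1..Suc n} (\<lambda>_. lborel)) =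
        (\<integral>\<^sup>+x. (\<integral>\<^sup>+y. ennreal (chain p i u n x * normal_density (\<mu> x) \<sigma> y * ((x(Suc n := y)) k)^2) \<partial>lborel) \<partial>PiM {1..n} (\<lambda>_. lborel))"
        using k by (intro gen) (auto intro!: borel_measurable_power comp_meas)
      also have "\<dots> = (\<integral>\<^sup>+x. ennreal (chain p i u n x * (x k)^2) \<partial>PiM {1..n} (\<lambda>_. lborel))"
      proof (intro nn_integral_cong)
        fix x
        have "(\<integral>\<^sup>+y. ennreal (chain p i u n x * normal_density (\<mu> x) \<sigma> y * ((x(Suc n := y)) k)^2) \<partial>lborel)
            = (\<integral>\<^sup>+y. ennreal (chain p i u n x * (x k)^2) * ennreal (normal_density (\<mu> x) \<sigma> y) \<partial>lborel)"
          using False by (intro nn_integral_cong) (simp add: ennreal_mult[symmetric] chain_nonneg mult_ac)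
        also have "\<dots> = ennreal (chain p i u n x * (x k)^2) * (\<integral>\<^sup>+y. ennreal (normal_density (\<mu> x) \<sigma> y) \<partial>lborel)"
          by (rule nn_integral_cmult) simp
        also have "\<dots> = ennreal (chain p i u n x * (x k)^2)" using normal_nn_int[OF sp] by simp
        finally show "(\<integral>\<^sup>+y. ennreal (chain p i u n x * normal_density (\<mu> x) \<sigma> y * ((x(Suc n := y)) k)^2) \<partial>lborel) = ennreal (chain p i u n x * (x k)^2)" .
      qed
      also have "\<dots> < \<infinity>" by (rule IH(2)[OF k'])
      finally show ?thesis .
    next
      case True
      define a where "a = coefB p i (u (Suc n))"
      define b where "b = coefb p i (u (Suc n))"
      have "(\<integral>\<^sup>+x. ennreal (chain p i u (Suc n) x * (x k)^2) \<partial>PiM {1..Suc n} (\<lambda>_. lborel)) =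
        (\<integral>\<^sup>+x. (\<integral>\<^sup>+y. ennreal (chain p i u n x * normal_density (\<mu> x) \<sigma> y * ((x(Suc n := y)) k)^2) \<partial>lborel) \<partial>PiM {1..n} (\<lambda>_. lborel))"
        using k by (intro gen) (auto intro!: borel_measurable_power comp_meas)
      also have "\<dots> = (\<integral>\<^sup>+x. ennreal (chain p i u n x * (\<sigma>^2 + (\<mu> x)^2)) \<partial>PiM {1..n} (\<lambda>_. lborel))"
      proof (intro nn_integral_cong)
        fix x
        have "(\<integral>\<^sup>+y. ennreal (chain p i u n x * normal_density (\<mu> x) \<sigma> y * ((x(Suc n := y)) k)^2) \<partial>lborel)
            = (\<integral>\<^sup>+y. ennreal (chain p i u n x) * ennreal (normal_density (\<mu> x) \<sigma> y * y^2) \<partial>lborel)"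
          using True by (intro nn_integral_cong) (simp add: ennreal_mult[symmetric] chain_nonneg mult_ac)
        also have "\<dots> = ennreal (chain p i u n x) * (\<integral>\<^sup>+y. ennreal (normal_density (\<mu> x) \<sigma> y * y^2) \<partial>lborel)"
          by (rule nn_integral_cmult) simp
        also have "\<dots> = ennreal (chain p i u n x * (\<sigma>^2 + (\<mu> x)^2))"
          using normal_nn_moment2[OF sp] by (simp add: ennreal_mult chain_nonneg)
        finally show "(\<integral>\<^sup>+y. ennreal (chain p i u n x * normal_density (\<mu> x) \<sigma> y * ((x(Suc n := y)) k)^2) \<partial>lborel) = ennreal (chain p i u n x * (\<sigma>^2 + (\<mu> x)^2))" .
      qed
      also have "\<dots> \<le> (\<integral>\<^sup>+x. ennreal (2 * a^2) * ennreal (chain p i u n x * (x n)^2) + ennreal (\<sigma>^2 + 2 * b^2) * ennreal (chain p i u n x) \<partial>PiM {1..n} (\<lambda>_. lborel))"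
      proof (intro nn_integral_mono)
        fix x
        have "(\<mu> x)^2 \<le> 2 * a^2 * (x n)^2 + 2 * b^2"
        proof -
          have e: "2*a^2*(x n)^2 + 2*b^2 - (a*x n + b)^2 = (a * x n - b)^2"
            by (simp add: power2_eq_square algebra_simps)
          have mu: "\<mu> x = a * x n + b" unfolding \<mu>_def a_def b_def ..
          show ?thesis unfolding mu using e zero_le_power2[of "a * x n - b"] by linarith
        qed
        then have "chain p i u n x * (\<sigma>^2 + (\<mu> x)^2) \<le> 2 * a^2 * (chain p i u n x * (x n)^2) + (\<sigma>^2 + 2 * b^2) * chain p i u n x"
          using chain_nonneg[of p i u n x] by (smt (verit) mult_left_mono distrib_left mult.commute mult.left_commute)
        then show "ennreal (chain p i u n x * (\<sigma>^2 + (\<mu> x)^2)) \<le> ennreal (2 * a^2) * ennreal (chain p i u n x * (x n)^2) + ennreal (\<sigma>^2 + 2 * b^2) * ennreal (chain p i u n x)"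
          by (simp add: ennreal_mult[symmetric] ennreal_plus[symmetric] chain_nonneg del: ennreal_plus)
      qed
      also have "\<dots> = ennreal (2 * a^2) * (\<integral>\<^sup>+x. ennreal (chain p i u n x * (x n)^2) \<partial>PiM {1..n} (\<lambda>_. lborel))
          + ennreal (\<sigma>^2 + 2 * b^2) * (\<integral>\<^sup>+x. ennreal (chain p i u n x) \<partial>PiM {1..n} (\<lambda>_. lborel))"
        using mn step.hyps(1)
        by (subst nn_integral_add) (auto intro!: borel_measurable_power comp_meas simp: nn_integral_cmult)
      also have "\<dots> < \<infinity>" using IH step.hyps(1) by (simp add: ennreal_mult_less_top)
      finally show ?thesis .
    qed
    show "(\<integral>\<^sup>+x. ennreal (chain p i u (Suc n) x) \<partial>PiM {1..Suc n} (\<lambda>_. lborel)) = 1 \<and>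
      (\<forall>k\<in>{1..Suc n}. (\<integral>\<^sup>+x. ennreal (chain p i u (Suc n) x * (x k)^2) \<partial>PiM {1..Suc n} (\<lambda>_. lborel)) < \<infinity>)"
      using 1 2 by blast
  qed
qed

lemma chain_integrable:
  assumes v: "valid_slgp C p" and T: "T \<ge> 1" and u: "\<forall>t\<in>{1..T}. u t \<in> {1..C}"
    and qm: "q \<in> borel_measurable (PiM {1..T} (\<lambda>_. lborel::real measure))"
    and qb: "\<And>x. \<bar>q x\<bar> \<le> 1 + (\<Sum>k\<in>{1..T}. (x k)^2)"
  shows "integrable (PiM {1..T} (\<lambda>_. lborel)) (\<lambda>x. chain p i u T x * q x)"
proof -
  let ?M = "PiM {1..T} (\<lambda>_. lborel::real measure)"
  have ci: "(\<integral>\<^sup>+x. ennreal (chain p i u T x) \<partial>?M) = 1"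
    "\<And>k. k \<in> {1..T} \<Longrightarrow> (\<integral>\<^sup>+x. ennreal (chain p i u T x * (x k)^2) \<partial>?M) < \<infinity>"
    using chain_int[OF v T, of u i] u by auto
  have cm: "chain p i u T \<in> borel_measurable ?M" using T by (intro chain_meas) auto
  have km: "\<And>k. k \<in> {1..T} \<Longrightarrow> (\<lambda>x. chain p i u T x * (x k)^2) \<in> borel_measurable ?M"
    using cm by (auto intro!: borel_measurable_times borel_measurable_power comp_meas)
  have "(\<integral>\<^sup>+x. ennreal (chain p i u T x * (1 + (\<Sum>k\<in>{1..T}. (x k)^2))) \<partial>?M) =
        (\<integral>\<^sup>+x. ennreal (chain p i u T x) + (\<Sum>k\<in>{1..T}. ennreal (chain p i u T x * (x k)^2)) \<partial>?M)"
    by (intro nn_integral_cong)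
       (simp add: distrib_left sum_distrib_left ennreal_plus[symmetric] sum_ennreal chain_nonneg sum_nonneg
             del: ennreal_plus)
  also have "\<dots> = (\<integral>\<^sup>+x. ennreal (chain p i u T x) \<partial>?M) + (\<Sum>k\<in>{1..T}. \<integral>\<^sup>+x. ennreal (chain p i u T x * (x k)^2) \<partial>?M)"
    using cm km by (simp add: nn_integral_add nn_integral_sum)
  also have "\<dots> < \<infinity>" using ci by (simp add: ennreal_sum_less_top)
  finally have fin: "(\<integral>\<^sup>+x. ennreal (chain p i u T x * (1 + (\<Sum>k\<in>{1..T}. (x k)^2))) \<partial>?M) < \<infinity>" .
  have int: "integrable ?M (\<lambda>x. chain p i u T x * (1 + (\<Sum>k\<in>{1..T}. (x k)^2)))"
    using fin cm by (intro integrableI_nonneg)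
      (auto intro!: borel_measurable_times borel_measurable_add borel_measurable_sum borel_measurable_power comp_meas
        simp: chain_nonneg sum_nonneg)
  show ?thesis
  proof (rule Bochner_Integration.integrable_bound[OF int])
    show "(\<lambda>x. chain p i u T x * q x) \<in> borel_measurable ?M" using cm qm by simp
    show "AE x in ?M. norm (chain p i u T x * q x) \<le> norm (chain p i u T x * (1 + (\<Sum>k\<in>{1..T}. (x k)^2)))"
    proof (intro AE_I2)
      fix x :: "nat \<Rightarrow> real"
      have "0 \<le> (\<Sum>k\<in>{1..T}. (x k)^2)" by (intro sum_nonneg) simp
      then have "0 \<le> 1 + (\<Sum>k\<in>{1..T}. (x k)^2)" by linarith
      then show "norm (chain p i u T x * q x) \<le> norm (chain p i u T x * (1 + (\<Sum>k\<in>{1..T}. (x k)^2)))"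
        using qb[of x] chain_nonneg[of p i u T x] by (simp add: abs_mult mult_left_mono)
    qed
  qed
qed

lemma chain_integral:
  assumes v: "valid_slgp C p" and T: "T \<ge> 1" and u: "\<forall>t\<in>{1..T}. u t \<in> {1..C}"
  shows "(\<integral>x. chain p i u T x \<partial>PiM {1..T} (\<lambda>_. lborel)) = 1"
proof -
  have int: "integrable (PiM {1..T} (\<lambda>_. lborel)) (\<lambda>x. chain p i u T x * 1)"
    by (rule chain_integrable[OF v T u]) (auto simp: sum_nonneg)
  have "(\<integral>\<^sup>+x. ennreal (chain p i u T x) \<partial>PiM {1..T} (\<lambda>_. lborel)) = 1"
    using chain_int[OF v T, of u i] u by auto
  then have "ennreal (\<integral>x. chain p i u T x \<partial>PiM {1..T} (\<lambda>_. lborel)) = 1"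
    using int by (subst (asm) nn_integral_eq_integral) (auto simp: chain_nonneg)
  moreover have "(\<integral>x. chain p i u T x \<partial>PiM {1..T} (\<lambda>_. lborel)) \<ge> 0"
    by (simp add: chain_nonneg)
  ultimately show ?thesis by simp
qed

lemma comp_density_nonneg:
  assumes v: "valid_slgp C p" and T: "T \<ge> 1"
  shows "comp_density C T p i x \<ge> 0"
  unfolding comp_density_eq
  by (intro sum_nonneg mult_nonneg_nonneg wt_nonneg[OF v _ T] chain_nonneg) (auto simp: PiE_iff)

lemma comp_density_meas:
  assumes T: "T \<ge> 1"
  shows "comp_density C T p i \<in> borel_measurable (PiM {1..T} (\<lambda>_. lborel::real measure))"
proof -
  have "(\<lambda>x. \<Sum>u\<in>PiE {1..T} (\<lambda>_. {1..C}). wt p i u T * chain p i u T x) \<in> borel_measurable (PiM {1..T} (\<lambda>_. lborel::real measure))"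
    using T by (intro borel_measurable_sum borel_measurable_times chain_meas) auto
  then show ?thesis unfolding comp_density_eq[abs_def] .
qed

lemma comp_density_integrable:
  assumes v: "valid_slgp C p" and T: "T \<ge> 1"
    and qm: "q \<in> borel_measurable (PiM {1..T} (\<lambda>_. lborel::real measure))"
    and qb: "\<And>x. \<bar>q x\<bar> \<le> 1 + (\<Sum>k\<in>{1..T}. (x k)^2)"
  shows "integrable (PiM {1..T} (\<lambda>_. lborel)) (\<lambda>x. comp_density C T p i x * q x)"
proof -
  have "integrable (PiM {1..T} (\<lambda>_. lborel)) (\<lambda>x. \<Sum>u\<in>PiE {1..T} (\<lambda>_. {1..C}). wt p i u T * (chain p i u T x * q x))"
    by (rule Bochner_Integration.integrable_sum, rule integrable_mult_right, rule chain_integrable[OF v T _ qm qb]) (auto simp: PiE_iff)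
  then show ?thesis unfolding comp_density_eq by (simp add: sum_distrib_right mult.assoc)
qed

lemma comp_density_integral:
  assumes v: "valid_slgp C p" and T: "T \<ge> 1"
  shows "(\<integral>x. comp_density C T p i x \<partial>PiM {1..T} (\<lambda>_. lborel)) = 1"
proof -
  have ints: "integrable (PiM {1..T} (\<lambda>_. lborel)) (\<lambda>x. chain p i u T x)" if "u \<in> PiE {1..T} (\<lambda>_. {1..C})" for u
    using chain_integrable[OF v T _ _ , of u "\<lambda>_. 1" i] that by (auto simp: PiE_iff sum_nonneg)
  have "(\<integral>x. comp_density C T p i x \<partial>PiM {1..T} (\<lambda>_. lborel)) =
      (\<Sum>u\<in>PiE {1..T} (\<lambda>_. {1..C}). wt p i u T * (\<integral>x. chain p i u T x \<partial>PiM {1..T} (\<lambda>_. lborel)))"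
    unfolding comp_density_eq
  proof (subst Bochner_Integration.integral_sum)
    show "\<And>u. u \<in> PiE {1..T} (\<lambda>_. {1..C}) \<Longrightarrow> integrable (PiM {1..T} (\<lambda>_. lborel)) (\<lambda>x. wt p i u T * chain p i u T x)"
      by (rule integrable_mult_right, rule ints)
  qed simp
  also have "\<dots> = (\<Sum>u\<in>PiE {1..T} (\<lambda>_. {1..C}). wt p i u T)"
  proof (intro sum.cong refl)
    fix u assume "u \<in> PiE {1..T} (\<lambda>_. {1..C})"
    then have "\<forall>t\<in>{1..T}. u t \<in> {1..C}" by (simp only: PiE_iff) blast
    then show "wt p i u T * (\<integral>x. chain p i u T x \<partial>PiM {1..T} (\<lambda>_. lborel)) = wt p i u T"
      by (simp only: chain_integral[OF v T] mult_1_right)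
  qed
  also have "\<dots> = 1" by (rule wt_sum[OF v T])
  finally show ?thesis .
qed

lemma box_measure_cart:
  fixes l u :: "real^'d"
  shows "emeasure lborel (box l u) = (\<Prod>i\<in>UNIV. emeasure lborel {l$i<..<u$i})"
proof (cases "\<forall>i. l$i \<le> u$i")
  case True
  have "emeasure lborel (box l u) = emeasure lborel (cbox l u)"
    by (simp only: emeasure_lborel_box_eq emeasure_lborel_cbox_eq)
  also have "\<dots> = ennreal (Henstock_Kurzweil_Integration.content (cbox l u))"
    using emeasure_lborel_cbox_finite[of l u] by (intro emeasure_eq_ennreal_measure) simp
  also have "l \<in> cbox l u" using True by (simp add: mem_box_cart)
  then have "cbox l u \<noteq> {}" by blast
  then have "Henstock_Kurzweil_Integration.content (cbox l u) = (\<Prod>i\<in>UNIV. u$i - l$i)" by (simp add: content_cbox_cart)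
  also have "ennreal (\<Prod>i\<in>UNIV. u$i - l$i) = (\<Prod>i\<in>UNIV. ennreal (u$i - l$i))"
    using True by (intro prod_ennreal[symmetric]) auto
  also have "\<dots> = (\<Prod>i\<in>UNIV. emeasure lborel {l$i<..<u$i})"
    using True by (intro prod.cong refl) simp
  finally show ?thesis .
next
  case False
  then obtain i where i: "u$i < l$i" by (auto simp: not_le)
  then have "box l u = {}" by (auto simp: mem_box_cart) (metis less_trans less_asym)
  moreover have z: "emeasure lborel {l$i<..<u$i} = 0" using i by simp
  have "(\<Prod>i\<in>UNIV. emeasure lborel {l$i<..<u$i}) = 0"
    unfolding ennreal_prod_eq_0 by (intro conjI finite bexI[of _ i] z UNIV_I)
  ultimately show ?thesis by simp
qed

lemma box_int_range:
  assumes "X \<in> range (\<lambda>(a, b). box a b :: 'a::euclidean_space set)" "Y \<in> range (\<lambda>(a, b). box a b :: 'a set)"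
  shows "X \<inter> Y \<in> range (\<lambda>(a, b). box a b :: 'a set)"
proof -
  obtain a b c d where ab: "X = box a b" "Y = box c d" using assms by auto
  define p :: 'a where "p = (\<Sum>i\<in>Basis. max (a\<bullet>i) (c\<bullet>i) *\<^sub>R i)"
  define q :: 'a where "q = (\<Sum>i\<in>Basis. min (b\<bullet>i) (d\<bullet>i) *\<^sub>R i)"
  have eq: "X \<inter> Y = box p q" unfolding ab p_def q_def by (rule box_Int_box)
  show ?thesis unfolding eq using rangeI[of "\<lambda>(a, b). box a b :: 'a set" "(p, q)"] by simp
qed

lemma vec_meas:
  fixes f :: "'a \<Rightarrow> 'd::finite \<Rightarrow> real"
  assumes "\<And>i. (\<lambda>x. f x i) \<in> borel_measurable M"
  shows "(\<lambda>x. \<chi> i. f x i) \<in> borel_measurable M"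
proof -
  have eq: "(\<chi> i. f x i) = (\<Sum>j\<in>UNIV. f x j *\<^sub>R axis j (1::real))" for x
    using basis_expansion[of "\<chi> i. f x i"] by (simp add: scalar_mult_eq_scaleR)
  have "(\<lambda>x. \<Sum>j\<in>UNIV. f x j *\<^sub>R axis j (1::real)) \<in> borel_measurable M"
    by (intro borel_measurable_sum borel_measurable_scaleR assms borel_measurable_const)
  then show ?thesis unfolding eq .
qed

lemma iso_PiM:
  fixes T :: nat
  shows "distr (PiM (UNIV::'d::finite set) (\<lambda>_. PiM {1..T} (\<lambda>_. lborel::real measure)))
     (PiM {1..T} (\<lambda>_. lborel::(real^'d) measure)) (\<lambda>y. \<lambda>t\<in>{1..T}. \<chi> i. y i t)
   = PiM {1..T} (\<lambda>_. lborel::(real^'d) measure)"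
proof -
  define I where "I = {1..T}"
  let ?Q = "PiM (UNIV::'d set) (\<lambda>_. PiM I (\<lambda>_. lborel::real measure))"
  let ?P = "PiM I (\<lambda>_. lborel::(real^'d) measure)"
  define \<phi> where "\<phi> = (\<lambda>(y::'d \<Rightarrow> nat \<Rightarrow> real). \<lambda>t\<in>I. \<chi> i. y i t)"
  let ?D = "distr ?Q ?P \<phi>"
  have fI: "finite I" by (simp add: I_def)
  interpret L: product_sigma_finite "\<lambda>_::nat. lborel::real measure" by standard
  have sfQ: "sigma_finite_measure (PiM I (\<lambda>_. lborel::real measure))" by (rule L.sigma_finite[OF fI])
  interpret Qp: product_sigma_finite "\<lambda>_::'d. PiM I (\<lambda>_::nat. lborel::real measure)"
    by (simp add: product_sigma_finite_def sfQ)
  interpret V: product_sigma_finite "\<lambda>_::nat. lborel::(real^'d) measure" by standard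
  have \<phi>m: "\<phi> \<in> measurable ?Q ?P"
    unfolding \<phi>_def
  proof (rule measurable_restrict)
    fix t assume t: "t \<in> I"
    have "(\<lambda>y::'d \<Rightarrow> nat \<Rightarrow> real. \<chi> i. y i t) \<in> borel_measurable ?Q"
    proof (rule vec_meas)
      fix i :: 'd
      have "(\<lambda>y::'d \<Rightarrow> nat \<Rightarrow> real. y i) \<in> measurable ?Q (PiM I (\<lambda>_. lborel::real measure))"
        by (rule measurable_component_singleton) simp
      moreover have "(\<lambda>z::nat \<Rightarrow> real. z t) \<in> borel_measurable (PiM I (\<lambda>_. lborel::real measure))"
        using t by simp
      ultimately show "(\<lambda>y::'d \<Rightarrow> nat \<Rightarrow> real. y i t) \<in> borel_measurable ?Q"
        by (rule measurable_compose[where f="\<lambda>y. y i" and g="\<lambda>z. z t"])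
    qed
    then show "(\<lambda>y::'d \<Rightarrow> nat \<Rightarrow> real. \<chi> i. y i t) \<in> measurable ?Q lborel" by simp
  qed
  define Bx where "Bx = range (\<lambda>(a, b). box a b :: (real^'d) set)"
  define \<Omega> where "\<Omega> = PiE I (\<lambda>_. UNIV::(real^'d) set)"
  define E where "E = {{f \<in> \<Omega>. \<forall>t\<in>I. f t \<in> A t} | A. A \<in> Pi I (\<lambda>_. Bx)}"
  have sP: "sets ?P = sigma_sets \<Omega> E"
  proof -
    have "sets ?P = sets (PiM I (\<lambda>_. sigma UNIV Bx))"
      by (intro sets_PiM_cong) (simp_all add: Bx_def borel_eq_box[symmetric])
    also have "\<dots> = sets (sigma \<Omega> {{f\<in>\<Omega>. \<forall>i\<in>j. f i \<in> A i} | A j. j \<in> {I} \<and> A \<in> Pi j (\<lambda>_. Bx)})"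
      unfolding \<Omega>_def
    proof (rule sets_PiM_sigma)
      fix i assume "i \<in> I"
      show "\<exists>S\<subseteq>Bx. countable S \<and> UNIV = \<Union>S"
        by (intro exI[of _ "range (\<lambda>n::nat. box (- (real n *\<^sub>R One)) (real n *\<^sub>R One))"])
           (auto simp: Bx_def UN_box_eq_UNIV)
    qed (use fI in auto)
    also have "{{f\<in>\<Omega>. \<forall>i\<in>j. f i \<in> A i} | A j. j \<in> {I} \<and> A \<in> Pi j (\<lambda>_. Bx)} = E"
      unfolding E_def by simp
    also have "sets (sigma \<Omega> E) = sigma_sets \<Omega> E"
      by (rule sets_measure_of) (auto simp: E_def)
    finally show ?thesis .
  qed
  have rect: "{f \<in> \<Omega>. \<forall>t\<in>I. f t \<in> A t} = PiE I A" for A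
    by (auto simp: \<Omega>_def PiE_def Pi_def)
  show ?thesis unfolding I_def[symmetric] \<phi>_def[symmetric]
  proof (rule measure_eqI_generator_eq[symmetric])
    show "Int_stable E"
      unfolding Int_stable_def
    proof safe
      fix a b assume "a \<in> E" "b \<in> E"
      then obtain A B where A: "A \<in> Pi I (\<lambda>_. Bx)" "a = {f \<in> \<Omega>. \<forall>t\<in>I. f t \<in> A t}"
        and B: "B \<in> Pi I (\<lambda>_. Bx)" "b = {f \<in> \<Omega>. \<forall>t\<in>I. f t \<in> B t}"
        unfolding E_def by blast
      have ab: "a \<inter> b = {f \<in> \<Omega>. \<forall>t\<in>I. f t \<in> A t \<inter> B t}" using A B by auto
      have AB: "(\<lambda>t. A t \<inter> B t) \<in> Pi I (\<lambda>_. Bx)"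
        using A(1) B(1) unfolding Bx_def Pi_def by (auto intro!: box_int_range)
      show "a \<inter> b \<in> E" unfolding E_def
        by (rule CollectI, rule exI[of _ "\<lambda>t. A t \<inter> B t"], rule conjI[OF ab AB])
    qed
    show "E \<subseteq> Pow \<Omega>" unfolding E_def by auto
    show "sets ?P = sigma_sets \<Omega> E" by (rule sP)
    show "sets ?D = sigma_sets \<Omega> E" using sP by simp
    define An where "An n = {f \<in> \<Omega>. \<forall>t\<in>I. f t \<in> box (vec (- real n)) (vec (real n))}" for n :: nat
    show "range An \<subseteq> E"
    proof safe
      fix n
      show "An n \<in> E" unfolding An_def E_def Bx_def
        by (rule CollectI, rule exI[of _ "\<lambda>_. box (vec (- real n)) (vec (real n))"]) auto
    qed
    show "(\<Union>n. An n) = \<Omega>"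
    proof
      show "(\<Union>n. An n) \<subseteq> \<Omega>" unfolding An_def by auto
      show "\<Omega> \<subseteq> (\<Union>n. An n)"
      proof
        fix f assume f: "f \<in> \<Omega>"
        define n where "n = nat \<lceil>\<Sum>t\<in>I. norm (f t)\<rceil> + 1"
        have "f \<in> An n" unfolding An_def
        proof (intro CollectI conjI ballI f)
          fix t assume t: "t \<in> I"
          have "norm (f t) \<le> (\<Sum>t\<in>I. norm (f t))"
            using t fI by (intro member_le_sum) auto
          also have "\<dots> < real n" unfolding n_def using real_nat_ceiling_ge[of "\<Sum>t\<in>I. norm (f t)"] by simp
          finally have lt: "norm (f t) < real n" .
          have "vec (- real n) $ i < f t $ i \<and> f t $ i < vec (real n) $ i" for i
          proof -
            have "\<bar>f t $ i\<bar> \<le> norm (f t)" by (rule component_le_norm_cart)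
            then have "- real n < f t $ i \<and> f t $ i < real n" using lt by (simp only: abs_le_iff) linarith
            then show ?thesis by simp
          qed
          then show "f t \<in> box (vec (- real n)) (vec (real n))"
            unfolding mem_box_cart by blast
        qed
        then show "f \<in> (\<Union>n. An n)" by blast
      qed
    qed
    show "emeasure ?P (An n) \<noteq> \<infinity>" for n
    proof -
      let ?b = "box (vec (- real n)) (vec (real n)) :: (real^'d) set"
      have "emeasure ?P (An n) = (\<Prod>t\<in>I. emeasure lborel ?b)"
        unfolding An_def rect by (rule V.emeasure_PiM[OF fI]) simp
      also have "\<dots> = emeasure lborel ?b ^ card I" by (rule prod_constant)
      also have "\<dots> < \<infinity>" unfolding infinity_ennreal_def power_less_top_ennreal
        using emeasure_lborel_box_finite[of "vec (- real n)" "vec (real n) :: real^'d"]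
        unfolding infinity_ennreal_def by (rule disjI1)
      finally show ?thesis by (rule less_imp_neq)
    qed
    show "emeasure ?P X = emeasure ?D X" if X: "X \<in> E" for X
    proof -
      have Xs: "X \<in> sets ?P" using X sP by (simp add: sigma_sets.Basic)
      obtain A where A: "A \<in> Pi I (\<lambda>_. Bx)" "X = {f \<in> \<Omega>. \<forall>t\<in>I. f t \<in> A t}"
        using X unfolding E_def by blast
      have "\<forall>t\<in>I. \<exists>lu. A t = box (fst lu) (snd lu)"
      proof
        fix t assume "t \<in> I"
        then have "A t \<in> Bx" using A(1) by (simp add: Pi_def)
        then obtain a b where "A t = box a b" unfolding Bx_def by auto
        then show "\<exists>lu. A t = box (fst lu) (snd lu)" by (intro exI[of _ "(a, b)"]) simp
      qed
      from bchoice[OF this] obtain lu where lu0: "\<forall>t\<in>I. A t = box (fst (lu t)) (snd (lu t))" by blast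
      then have lu: "\<And>t. t \<in> I \<Longrightarrow> A t = box (fst (lu t)) (snd (lu t))" by blast
      define l where "l t = fst (lu t)" for t
      define u where "u t = snd (lu t)" for t
      have XP: "X = PiE I (\<lambda>t. box (l t) (u t))"
        unfolding A(2) rect l_def u_def using lu by (auto simp: PiE_def Pi_def)
      have "emeasure ?P X = (\<Prod>t\<in>I. emeasure lborel (box (l t) (u t)))"
        unfolding XP by (rule V.emeasure_PiM[OF fI]) simp
      also have "\<dots> = (\<Prod>t\<in>I. \<Prod>i\<in>UNIV. emeasure lborel {l t$i<..<u t$i})"
        by (rule prod.cong[OF refl], rule box_measure_cart)
      also have "\<dots> = (\<Prod>i\<in>UNIV. \<Prod>t\<in>I. emeasure lborel {l t$i<..<u t$i})"
        by (rule prod.swap)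
      also have "\<dots> = (\<Prod>i\<in>UNIV. emeasure (PiM I (\<lambda>_. lborel::real measure)) (PiE I (\<lambda>t. {l t$i<..<u t$i})))"
        by (rule prod.cong[OF refl], rule L.emeasure_PiM[OF fI, symmetric]) simp
      also have "\<dots> = emeasure ?Q (PiE UNIV (\<lambda>i. PiE I (\<lambda>t. {l t$i<..<u t$i})))"
        by (rule Qp.emeasure_PiM[symmetric]) (auto intro!: sets_PiM_I_finite simp: fI)
      also have "PiE UNIV (\<lambda>i. PiE I (\<lambda>t. {l t$i<..<u t$i})) = \<phi> -` X \<inter> space ?Q"
      proof (rule set_eqI)
        fix y :: "'d \<Rightarrow> nat \<Rightarrow> real"
        have sQ: "y \<in> space ?Q \<longleftrightarrow> (\<forall>i. y i \<in> extensional I)"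
          by (simp add: space_PiM PiE_iff)
        have L: "y \<in> PiE UNIV (\<lambda>i. PiE I (\<lambda>t. {l t$i<..<u t$i})) \<longleftrightarrow>
            (\<forall>i. (\<forall>t\<in>I. l t$i < y i t \<and> y i t < u t$i) \<and> y i \<in> extensional I)"
          by (simp add: PiE_iff)
        have R: "\<phi> y \<in> X \<longleftrightarrow> (\<forall>t\<in>I. \<forall>i. l t$i < y i t \<and> y i t < u t$i)"
          unfolding XP \<phi>_def by (simp add: PiE_iff mem_box_cart)
        show "y \<in> PiE UNIV (\<lambda>i. PiE I (\<lambda>t. {l t$i<..<u t$i})) \<longleftrightarrow> y \<in> \<phi> -` X \<inter> space ?Q"
          unfolding L Int_iff vimage_eq R sQ by blast
      qed
      also have "emeasure ?Q (\<phi> -` X \<inter> space ?Q) = emeasure ?D X"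
        by (rule emeasure_distr[OF \<phi>m Xs, symmetric])
      finally show ?thesis .
    qed
  qed
qed

lemma comp_density_local:
  assumes T: "T \<ge> 1" and eq: "\<forall>t\<in>{1..T}. x t = x' t"
  shows "comp_density C T p i x = comp_density C T p i x'"
proof -
  have "chain p i u T x = chain p i u T x'" for u
  proof -
    have "(\<Prod>t\<in>{2..T}. normal_density (coefB p i (u t) * x (t - 1) + coefb p i (u t))
                                       (sqrt (varPsi p i (u t))) (x t)) =
          (\<Prod>t\<in>{2..T}. normal_density (coefB p i (u t) * x' (t - 1) + coefb p i (u t))
                                       (sqrt (varPsi p i (u t))) (x' t))"
    proof (intro prod.cong refl)
      fix t assume "t \<in> {2..T}"
      then have "t - 1 \<in> {1..T}" "t \<in> {1..T}" by auto
      then show "normal_density (coefB p i (u t) * x (t - 1) + coefb p i (u t)) (sqrt (varPsi p i (u t))) (x t) =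
        normal_density (coefB p i (u t) * x' (t - 1) + coefb p i (u t)) (sqrt (varPsi p i (u t))) (x' t)"
        using eq by simp
    qed
    moreover have "x 1 = x' 1" using eq T by auto
    ultimately show ?thesis unfolding chain_def by simp
  qed
  then show ?thesis unfolding comp_density_eq by simp
qed

lemma phi_meas:
  fixes I :: "nat set"
  shows "(\<lambda>y::'d::finite \<Rightarrow> nat \<Rightarrow> real. \<lambda>t\<in>I. \<chi> i. y i t) \<in>
    measurable (PiM (UNIV::'d set) (\<lambda>_. PiM I (\<lambda>_. lborel::real measure))) (PiM I (\<lambda>_. lborel::(real^'d) measure))"
proof (rule measurable_restrict)
  let ?Q = "PiM (UNIV::'d set) (\<lambda>_. PiM I (\<lambda>_. lborel::real measure))"
  fix t assume t: "t \<in> I"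
  have "(\<lambda>y::'d \<Rightarrow> nat \<Rightarrow> real. \<chi> i. y i t) \<in> borel_measurable ?Q"
  proof (rule vec_meas)
    fix i :: 'd
    have "(\<lambda>y::'d \<Rightarrow> nat \<Rightarrow> real. y i) \<in> measurable ?Q (PiM I (\<lambda>_. lborel::real measure))"
      by (rule measurable_component_singleton) simp
    moreover have "(\<lambda>z::nat \<Rightarrow> real. z t) \<in> borel_measurable (PiM I (\<lambda>_. lborel::real measure))"
      using t by simp
    ultimately show "(\<lambda>y::'d \<Rightarrow> nat \<Rightarrow> real. y i t) \<in> borel_measurable ?Q"
      by (rule measurable_compose[where f="\<lambda>y. y i" and g="\<lambda>z. z t"])
  qed
  then show "(\<lambda>y::'d \<Rightarrow> nat \<Rightarrow> real. \<chi> i. y i t) \<in> measurable ?Q lborel" by simp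
qed

lemma vec_nth_meas: "(\<lambda>x::real^'d::finite. x $ i) \<in> borel_measurable borel"
proof -
  have "(\<lambda>x::real^'d. x \<bullet> axis i 1) \<in> borel_measurable borel" by (intro borel_measurable_inner) auto
  then show ?thesis by (simp add: cart_eq_inner_axis)
qed

lemma psi_meas:
  fixes I :: "nat set"
  shows "(\<lambda>s. \<lambda>t\<in>I. (s t :: real^'d::finite) $ i) \<in>
    measurable (PiM I (\<lambda>_. lborel::(real^'d) measure)) (PiM I (\<lambda>_. lborel::real measure))"
proof (rule measurable_restrict)
  fix t assume t: "t \<in> I"
  have "(\<lambda>s. s t) \<in> measurable (PiM I (\<lambda>_. lborel::(real^'d) measure)) (borel :: (real^'d) measure)"
    using t by simp
  then have "(\<lambda>s. (s t :: real^'d) $ i) \<in> borel_measurable (PiM I (\<lambda>_. lborel::(real^'d) measure))"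
    by (rule measurable_compose) (rule vec_nth_meas)
  then show "(\<lambda>s. (s t :: real^'d) $ i) \<in> measurable (PiM I (\<lambda>_. lborel::(real^'d) measure)) lborel" by simp
qed

lemma source_prod:
  fixes p :: "'d::finite slgp" and h :: "'d \<Rightarrow> (nat \<Rightarrow> real) \<Rightarrow> real"
  assumes v: "valid_slgp C p" and T: "T \<ge> 1"
    and hm: "\<And>i. h i \<in> borel_measurable (PiM {1..T} (\<lambda>_. lborel))"
    and hb: "\<And>i x. \<bar>h i x\<bar> \<le> 1 + (\<Sum>k\<in>{1..T}. (x k)^2)"
    and hloc: "\<And>i x x'. (\<forall>t\<in>{1..T}. x t = x' t) \<Longrightarrow> h i x = h i x'"
  shows "integrable (source_law C T p) (\<lambda>s. \<Prod>i\<in>UNIV. h i (\<lambda>t. s t $ i))"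
    and "(\<integral>s. (\<Prod>i\<in>UNIV. h i (\<lambda>t. s t $ i)) \<partial>source_law C T p) =
         (\<Prod>i\<in>UNIV. \<integral>x. comp_density C T p i x * h i x \<partial>PiM {1..T} (\<lambda>_. lborel))"
proof -
  define I where "I = {1..T}"
  let ?P = "PiM I (\<lambda>_. lborel::(real^'d) measure)"
  let ?R = "PiM I (\<lambda>_. lborel::real measure)"
  let ?Q = "PiM (UNIV::'d set) (\<lambda>_. ?R)"
  define \<phi> where "\<phi> = (\<lambda>y::'d \<Rightarrow> nat \<Rightarrow> real. \<lambda>t\<in>I. \<chi> i. y i t)"
  define \<psi> where "\<psi> i s = (\<lambda>t\<in>I. (s t :: real^'d) $ i)" for i s
  define g where "g i = comp_density C T p i" for i
  interpret L: product_sigma_finite "\<lambda>_::nat. lborel::real measure" by standard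
  have sfQ: "sigma_finite_measure ?R" by (rule L.sigma_finite) (simp add: I_def)
  interpret Qp: product_sigma_finite "\<lambda>_::'d. ?R"
    by (simp add: product_sigma_finite_def sfQ)
  have iso: "distr ?Q ?P \<phi> = ?P" unfolding \<phi>_def I_def by (rule iso_PiM)
  have \<phi>m: "\<phi> \<in> measurable ?Q ?P" unfolding \<phi>_def by (rule phi_meas)
  have \<psi>m: "\<psi> i \<in> measurable ?P ?R" for i unfolding \<psi>_def by (rule psi_meas)
  have hm': "h i \<in> borel_measurable ?R" for i using hm unfolding I_def .
  have gm: "g i \<in> borel_measurable ?R" for i unfolding g_def I_def by (rule comp_density_meas[OF T])
  have hl: "h i (\<lambda>t. s t $ i) = h i (\<psi> i s)" for i s
    by (rule hloc) (simp add: \<psi>_def I_def)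
  have gl: "comp_density C T p i (\<lambda>t. s t $ i) = g i (\<psi> i s)" for i s
    unfolding g_def by (rule comp_density_local[OF T]) (simp add: \<psi>_def I_def)
  have \<psi>\<phi>: "\<psi> i (\<phi> y) = y i" if "y \<in> space ?Q" for i y
  proof -
    have "y i \<in> extensional I" using that by (simp add: space_PiM PiE_iff)
    then show ?thesis unfolding \<psi>_def \<phi>_def by (auto simp: fun_eq_iff extensional_def)
  qed
  define f0 where "f0 s = (\<Prod>i\<in>UNIV. g i (\<psi> i s))" for s
  define F where "F s = (\<Prod>i\<in>UNIV. h i (\<psi> i s))" for s
  have f0m: "f0 \<in> borel_measurable ?P" unfolding f0_def
    by (intro borel_measurable_prod measurable_compose[OF \<psi>m gm])
  have Fm: "F \<in> borel_measurable ?P" unfolding F_def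
    by (intro borel_measurable_prod measurable_compose[OF \<psi>m hm'])
  have f0nn: "0 \<le> f0 s" for s unfolding f0_def g_def
    by (intro prod_nonneg ballI comp_density_nonneg[OF v T])
  have SL: "source_law C T p = density ?P (\<lambda>s. ennreal (f0 s))"
    unfolding source_law_def f0_def I_def[symmetric] gl ..
  have Feq: "(\<lambda>s. \<Prod>i\<in>UNIV. h i (\<lambda>t. s t $ i)) = F" unfolding F_def hl ..
  have cm: "(\<lambda>s. f0 s *\<^sub>R F s) \<in> borel_measurable ?P" using f0m Fm by simp
  have onQ: "f0 (\<phi> y) *\<^sub>R F (\<phi> y) = (\<Prod>i\<in>UNIV. g i (y i) * h i (y i))" if "y \<in> space ?Q" for y
    unfolding f0_def F_def using \<psi>\<phi>[OF that] by (simp add: prod.distrib)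
  have ints: "integrable ?R (\<lambda>x. g i x * h i x)" for i
    unfolding g_def I_def by (rule comp_density_integrable[OF v T hm hb])
  have intQ: "integrable ?Q (\<lambda>y. \<Prod>i\<in>UNIV. g i (y i) * h i (y i))"
    by (rule Qp.product_integrable_prod) (auto intro: ints)
  have "integrable (source_law C T p) F \<longleftrightarrow> integrable ?P (\<lambda>s. f0 s *\<^sub>R F s)"
    unfolding SL by (rule integrable_density[OF Fm f0m]) (simp add: f0nn)
  also have "\<dots> \<longleftrightarrow> integrable (distr ?Q ?P \<phi>) (\<lambda>s. f0 s *\<^sub>R F s)" unfolding iso ..
  also have "\<dots> \<longleftrightarrow> integrable ?Q (\<lambda>y. f0 (\<phi> y) *\<^sub>R F (\<phi> y))"
    by (rule integrable_distr_eq[OF \<phi>m cm])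
  also have "\<dots> \<longleftrightarrow> integrable ?Q (\<lambda>y. \<Prod>i\<in>UNIV. g i (y i) * h i (y i))"
    by (rule Bochner_Integration.integrable_cong[OF refl onQ])
  finally show "integrable (source_law C T p) (\<lambda>s. \<Prod>i\<in>UNIV. h i (\<lambda>t. s t $ i))"
    unfolding Feq using intQ by simp
  have "(\<integral>s. F s \<partial>source_law C T p) = (\<integral>s. f0 s *\<^sub>R F s \<partial>?P)"
    unfolding SL by (rule integral_density[OF Fm f0m]) (simp add: f0nn)
  also have "\<dots> = (\<integral>s. f0 s *\<^sub>R F s \<partial>distr ?Q ?P \<phi>)" unfolding iso ..
  also have "\<dots> = (\<integral>y. f0 (\<phi> y) *\<^sub>R F (\<phi> y) \<partial>?Q)"
    by (rule integral_distr[OF \<phi>m cm])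
  also have "\<dots> = (\<integral>y. (\<Prod>i\<in>UNIV. g i (y i) * h i (y i)) \<partial>?Q)"
    by (rule Bochner_Integration.integral_cong[OF refl onQ])
  also have "\<dots> = (\<Prod>i\<in>UNIV. \<integral>x. g i x * h i x \<partial>?R)"
    by (rule Qp.product_integral_prod) (auto intro: ints)
  finally show "(\<integral>s. (\<Prod>i\<in>UNIV. h i (\<lambda>t. s t $ i)) \<partial>source_law C T p) =
         (\<Prod>i\<in>UNIV. \<integral>x. comp_density C T p i x * h i x \<partial>PiM {1..T} (\<lambda>_. lborel))"
    unfolding Feq g_def I_def .
qed

lemma sq_le_sum: "(t::nat) \<in> {1..T} \<Longrightarrow> (x t)^2 \<le> (\<Sum>k\<in>{1..T}. (x k :: real)^2)"
  by (rule member_le_sum) auto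

lemma bound1: "(t::nat) \<in> {1..T} \<Longrightarrow> \<bar>x t\<bar> \<le> 1 + (\<Sum>k\<in>{1..T}. (x k :: real)^2)"
proof -
  assume t: "t \<in> {1..T}"
  have "\<bar>x t\<bar> \<le> 1 + (x t)^2"
  proof (cases "\<bar>x t\<bar> \<le> 1")
    case True then show ?thesis by (smt (verit) zero_le_power2)
  next
    case False
    then have "\<bar>x t\<bar> * 1 \<le> \<bar>x t\<bar> * \<bar>x t\<bar>" by (intro mult_left_mono) auto
    then show ?thesis using abs_mult_self_eq[of "x t"] by (simp add: power2_eq_square)
  qed
  then show ?thesis using sq_le_sum[OF t, of x] by linarith
qed

lemma bound2: "(t::nat) \<in> {1..T} \<Longrightarrow> (r::nat) \<in> {1..T} \<Longrightarrow> \<bar>x t * x r\<bar> \<le> 1 + (\<Sum>k\<in>{1..T}. (x k :: real)^2)"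
proof -
  assume t: "t \<in> {1..T}" and r: "r \<in> {1..T}"
  have "2 * \<bar>x t * x r\<bar> \<le> (x t)^2 + (x r)^2"
  proof -
    have "0 \<le> (\<bar>x t\<bar> - \<bar>x r\<bar>)^2" by simp
    then show ?thesis by (simp add: power2_eq_square algebra_simps abs_mult)
  qed
  then show ?thesis using sq_le_sum[OF t, of x] sq_le_sum[OF r, of x] by linarith
qed

lemma prod_two:
  fixes A B :: real
  assumes "i \<noteq> j"
  shows "(\<Prod>k\<in>(UNIV::'d::finite set). if k = i then A else if k = j then B else 1) = A * B"
proof -
  have "(\<Prod>k\<in>(UNIV::'d set). if k = i then A else if k = j then B else 1) =
      A * (\<Prod>k\<in>UNIV - {i}. if k = i then A else if k = j then B else 1)"
    by (subst prod.remove[of _ i]) auto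
  also have "(\<Prod>k\<in>UNIV - {i}. if k = i then A else if k = j then B else 1) =
      B * (\<Prod>k\<in>UNIV - {i} - {j}. if k = i then A else if k = j then B else 1)"
    using assms by (subst prod.remove[of _ j]) auto
  also have "(\<Prod>k\<in>UNIV - {i} - {j}. if k = i then A else if k = j then B else (1::real)) = 1"
    by (intro prod.neutral) auto
  finally show ?thesis by simp
qed

lemma prod_one:
  fixes A :: real
  shows "(\<Prod>k\<in>(UNIV::'d::finite set). if k = i then A else 1) = A"
  by (subst prod.remove[of _ i]) (auto intro!: prod.neutral)

lemma source_mom1:
  fixes p :: "'d::finite slgp"
  assumes v: "valid_slgp C p" and T: "T \<ge> 1" and t: "t \<in> {1..T}"
  shows "integrable (source_law C T p) (\<lambda>s. s t $ i)"
    and "(\<integral>s. s t $ i \<partial>source_law C T p) = (\<integral>x. comp_density C T p i x * x t \<partial>PiM {1..T} (\<lambda>_. lborel))"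
proof -
  define h where "h k x = (if k = i then x t else 1)" for k and x :: "nat \<Rightarrow> real"
  have hm: "h k \<in> borel_measurable (PiM {1..T} (\<lambda>_. lborel))" for k
    unfolding h_def using t by simp
  have hb: "\<bar>h k x\<bar> \<le> 1 + (\<Sum>k\<in>{1..T}. (x k)^2)" for k x
    unfolding h_def using bound1[OF t, of x] by (auto simp: sum_nonneg add_nonneg_nonneg)
  have hloc: "(\<forall>t\<in>{1..T}. x t = x' t) \<Longrightarrow> h k x = h k x'" for k x x'
    unfolding h_def using t by auto
  have eq: "(\<lambda>s. \<Prod>k\<in>UNIV. h k (\<lambda>t. s t $ k)) = (\<lambda>s::nat \<Rightarrow> real^'d. s t $ i)"
  proof
    fix s :: "nat \<Rightarrow> real^'d"
    have "h k (\<lambda>t. s t $ k) = (if k = i then s t $ i else 1)" for k by (simp add: h_def)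
    then show "(\<Prod>k\<in>UNIV. h k (\<lambda>t. s t $ k)) = s t $ i" by (simp add: prod_one)
  qed
  note P = source_prod[where h=h, OF v T hm hb hloc]
  show "integrable (source_law C T p) (\<lambda>s. s t $ i)" using P(1) unfolding eq .
  have "(\<integral>x. comp_density C T p k x * h k x \<partial>PiM {1..T} (\<lambda>_. lborel)) =
        (if k = i then (\<integral>x. comp_density C T p i x * x t \<partial>PiM {1..T} (\<lambda>_. lborel)) else 1)" for k
    unfolding h_def using comp_density_integral[OF v T, of k] by simp
  then show "(\<integral>s. s t $ i \<partial>source_law C T p) = (\<integral>x. comp_density C T p i x * x t \<partial>PiM {1..T} (\<lambda>_. lborel))"
    using P(2) unfolding eq by (simp add: prod_one)
qed

lemma source_mom2_same:
  fixes p :: "'d::finite slgp"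
  assumes v: "valid_slgp C p" and T: "T \<ge> 1" and t: "t \<in> {1..T}" and r: "r \<in> {1..T}"
  shows "integrable (source_law C T p) (\<lambda>s. s t $ i * s r $ i)"
proof -
  define h where "h k x = (if k = i then x t * x r else 1)" for k and x :: "nat \<Rightarrow> real"
  have hm: "h k \<in> borel_measurable (PiM {1..T} (\<lambda>_. lborel))" for k
    unfolding h_def using t r by simp
  have hb: "\<bar>h k x\<bar> \<le> 1 + (\<Sum>k\<in>{1..T}. (x k)^2)" for k x
    unfolding h_def using bound2[OF t r, of x] by (auto simp: sum_nonneg add_nonneg_nonneg)
  have hloc: "(\<forall>t\<in>{1..T}. x t = x' t) \<Longrightarrow> h k x = h k x'" for k x x'
    unfolding h_def using t r by auto
  have eq: "(\<lambda>s. \<Prod>k\<in>UNIV. h k (\<lambda>t. s t $ k)) = (\<lambda>s::nat \<Rightarrow> real^'d. s t $ i * s r $ i)"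
  proof
    fix s :: "nat \<Rightarrow> real^'d"
    have "h k (\<lambda>t. s t $ k) = (if k = i then s t $ i * s r $ i else 1)" for k by (simp add: h_def)
    then show "(\<Prod>k\<in>UNIV. h k (\<lambda>t. s t $ k)) = s t $ i * s r $ i" by (simp add: prod_one)
  qed
  show ?thesis using source_prod(1)[where h=h, OF v T hm hb hloc] unfolding eq .
qed

lemma source_mom2_diff:
  fixes p :: "'d::finite slgp"
  assumes v: "valid_slgp C p" and T: "T \<ge> 1" and t: "t \<in> {1..T}" and r: "r \<in> {1..T}" and ij: "i \<noteq> j"
  shows "integrable (source_law C T p) (\<lambda>s. s t $ i * s r $ j)"
    and "(\<integral>s. s t $ i * s r $ j \<partial>source_law C T p) =
        (\<integral>x. comp_density C T p i x * x t \<partial>PiM {1..T} (\<lambda>_. lborel)) *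
        (\<integral>x. comp_density C T p j x * x r \<partial>PiM {1..T} (\<lambda>_. lborel))"
proof -
  define h where "h k x = (if k = i then x t else if k = j then x r else 1)" for k and x :: "nat \<Rightarrow> real"
  have hm: "h k \<in> borel_measurable (PiM {1..T} (\<lambda>_. lborel))" for k
    unfolding h_def using t r by simp
  have hb: "\<bar>h k x\<bar> \<le> 1 + (\<Sum>k\<in>{1..T}. (x k)^2)" for k x
    unfolding h_def using bound1[OF t, of x] bound1[OF r, of x] by (auto simp: sum_nonneg add_nonneg_nonneg)
  have hloc: "(\<forall>t\<in>{1..T}. x t = x' t) \<Longrightarrow> h k x = h k x'" for k x x'
    unfolding h_def using t r by auto
  have eq: "(\<lambda>s. \<Prod>k\<in>UNIV. h k (\<lambda>t. s t $ k)) = (\<lambda>s::nat \<Rightarrow> real^'d. s t $ i * s r $ j)"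
  proof
    fix s :: "nat \<Rightarrow> real^'d"
    have "h k (\<lambda>t. s t $ k) = (if k = i then s t $ i else if k = j then s r $ j else 1)" for k by (simp add: h_def)
    then show "(\<Prod>k\<in>UNIV. h k (\<lambda>t. s t $ k)) = s t $ i * s r $ j" by (simp add: prod_two[OF ij])
  qed
  note P = source_prod[where h=h, OF v T hm hb hloc]
  show "integrable (source_law C T p) (\<lambda>s. s t $ i * s r $ j)" using P(1) unfolding eq .
  have "(\<integral>x. comp_density C T p k x * h k x \<partial>PiM {1..T} (\<lambda>_. lborel)) =
        (if k = i then (\<integral>x. comp_density C T p i x * x t \<partial>PiM {1..T} (\<lambda>_. lborel))
         else if k = j then (\<integral>x. comp_density C T p j x * x r \<partial>PiM {1..T} (\<lambda>_. lborel)) else 1)" for k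
    unfolding h_def using comp_density_integral[OF v T, of k] by simp
  then show "(\<integral>s. s t $ i * s r $ j \<partial>source_law C T p) =
        (\<integral>x. comp_density C T p i x * x t \<partial>PiM {1..T} (\<lambda>_. lborel)) *
        (\<integral>x. comp_density C T p j x * x r \<partial>PiM {1..T} (\<lambda>_. lborel))"
    using P(2) unfolding eq by (simp add: prod_two[OF ij])
qed

lemma cov_diag:
  fixes p :: "'d::finite slgp"
  assumes v: "valid_slgp C p" and T: "T \<ge> 1" and t: "t \<in> {1..T}" and r: "r \<in> {1..T}"
  shows "\<forall>i j. i \<noteq> j \<longrightarrow> cov_mat (source_law C T p) t r $ i $ j = 0"
  using source_mom2_diff(2)[OF v T t r] source_mom1(2)[OF v T t] source_mom1(2)[OF v T r]
  by (simp add: cov_mat_def)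

lemma source_int2:
  fixes p :: "'d::finite slgp"
  assumes v: "valid_slgp C p" and T: "T \<ge> 1" and t: "t \<in> {1..T}" and r: "r \<in> {1..T}"
  shows "integrable (source_law C T p) (\<lambda>s. s t $ j * s r $ k)"
  using source_mom2_same[OF v T t r, of j] source_mom2_diff(1)[OF v T t r, of j k] by (cases "j = k") auto

lemma sets_source_law: "sets (source_law C T p) = sets (PiM {1..T} (\<lambda>_. lborel))"
  unfolding source_law_def by simp

lemma obs_map_meas:
  fixes G :: "real^'d::finite^'k::finite"
  shows "(\<lambda>s. \<lambda>t\<in>{1..T}. G *v s t) \<in> measurable (source_law C T p) (PiM {1..T} (\<lambda>_. borel))"
proof -
  have "(\<lambda>s. \<lambda>t\<in>{1..T}. G *v s t) \<in> measurable (PiM {1..T} (\<lambda>_. lborel::(real^'d) measure)) (PiM {1..T} (\<lambda>_. borel))"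
  proof (rule measurable_restrict)
    fix t assume t: "t \<in> {1..T}"
    have c: "(\<lambda>s. (s t :: real^'d) $ j) \<in> borel_measurable (PiM {1..T} (\<lambda>_. lborel::(real^'d) measure))" for j
    proof -
      have "(\<lambda>s. s t) \<in> measurable (PiM {1..T} (\<lambda>_. lborel::(real^'d) measure)) (borel :: (real^'d) measure)"
        using t by simp
      then show ?thesis by (rule measurable_compose) (rule vec_nth_meas)
    qed
    have "(\<lambda>s. \<chi> a. \<Sum>j\<in>UNIV. G$a$j * (s t :: real^'d) $ j) \<in> borel_measurable (PiM {1..T} (\<lambda>_. lborel::(real^'d) measure))"
      by (intro vec_meas borel_measurable_sum borel_measurable_times borel_measurable_const c)
    then show "(\<lambda>s. G *v s t) \<in> measurable (PiM {1..T} (\<lambda>_. lborel::(real^'d) measure)) borel"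
      by (simp add: matrix_vector_mult_def)
  qed
  then show ?thesis by (simp add: measurable_cong_sets[OF sets_source_law refl])
qed

lemma obs_cov:
  fixes G :: "real^'d::finite^'k::finite" and p :: "'d slgp"
  assumes v: "valid_slgp C p" and T: "T \<ge> 1" and t: "t \<in> {1..T}" and r: "r \<in> {1..T}"
  shows "cov_mat (obs_law C T G p) t r = G ** cov_mat (source_law C T p) t r ** transpose G"
proof -
  let ?N = "source_law C T p"
  let ?\<Phi> = "\<lambda>s. \<lambda>t\<in>{1..T}. G *v s t"
  have \<Phi>m: "?\<Phi> \<in> measurable ?N (PiM {1..T} (\<lambda>_. borel))" by (rule obs_map_meas)
  have cm: "(\<lambda>w. (w t :: real^'k) $ a) \<in> borel_measurable (PiM {1..T} (\<lambda>_. borel))" if "t \<in> {1..T}" for t a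
  proof -
    have "(\<lambda>w. w t) \<in> measurable (PiM {1..T} (\<lambda>_. borel)) (borel :: (real^'k) measure)"
      using that by simp
    then show ?thesis by (rule measurable_compose) (rule vec_nth_meas)
  qed
  have mv: "(G *v x) $ a = (\<Sum>j\<in>UNIV. G$a$j * x$j)" for x a by (simp add: matrix_vector_mult_def)
  have I2: "(\<integral>w. w t $ a * w r $ b \<partial>obs_law C T G p) =
      (\<Sum>j\<in>UNIV. \<Sum>k\<in>UNIV. G$a$j * G$b$k * (\<integral>s. s t $ j * s r $ k \<partial>?N))" for a b
  proof -
    have "(\<integral>w. w t $ a * w r $ b \<partial>obs_law C T G p) = (\<integral>s. (?\<Phi> s) t $ a * (?\<Phi> s) r $ b \<partial>?N)"
      unfolding obs_law_def
      by (rule integral_distr[OF \<Phi>m]) (intro borel_measurable_times cm t r)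
    also have "\<dots> = (\<integral>s. (\<Sum>j\<in>UNIV. \<Sum>k\<in>UNIV. G$a$j * G$b$k * (s t $ j * s r $ k)) \<partial>?N)"
      using t r by (simp add: mv sum_distrib_left sum_distrib_right mult_ac)
    also have "\<dots> = (\<Sum>j\<in>UNIV. \<Sum>k\<in>UNIV. G$a$j * G$b$k * (\<integral>s. s t $ j * s r $ k \<partial>?N))"
      by (simp add: source_int2[OF v T t r])
    finally show ?thesis .
  qed
  have I1: "(\<integral>w. w t' $ a \<partial>obs_law C T G p) = (\<Sum>j\<in>UNIV. G$a$j * (\<integral>s. s t' $ j \<partial>?N))"
    if t': "t' \<in> {1..T}" for a t'
  proof -
    have "(\<integral>w. w t' $ a \<partial>obs_law C T G p) = (\<integral>s. (?\<Phi> s) t' $ a \<partial>?N)"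
      unfolding obs_law_def by (rule integral_distr[OF \<Phi>m cm[OF t']])
    also have "\<dots> = (\<integral>s. (\<Sum>j\<in>UNIV. G$a$j * s t' $ j) \<partial>?N)"
      using t' by (simp add: mv)
    also have "\<dots> = (\<Sum>j\<in>UNIV. G$a$j * (\<integral>s. s t' $ j \<partial>?N))"
      by (simp add: source_mom1(1)[OF v T t'])
    finally show ?thesis .
  qed
  show ?thesis
  proof (simp add: vec_eq_iff, intro allI)
    fix a b
    have "cov_mat (obs_law C T G p) t r $ a $ b =
      (\<Sum>j\<in>UNIV. \<Sum>k\<in>UNIV. G$a$j * G$b$k * ((\<integral>s. s t $ j * s r $ k \<partial>?N) - (\<integral>s. s t $ j \<partial>?N) * (\<integral>s. s r $ k \<partial>?N)))"
      unfolding cov_mat_def using I2[of a b] I1[OF t, of a] I1[OF r, of b]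
      by (simp add: right_diff_distrib sum_subtractf sum_distrib_left sum_distrib_right mult_ac)
    also have "\<dots> = (G ** cov_mat ?N t r ** transpose G) $ a $ b"
      by (simp add: matrix_matrix_mult_def transpose_def cov_mat_def sum_distrib_left sum_distrib_right mult_ac)
         (rule sum.swap)
    finally show "cov_mat (obs_law C T G p) t r $ a $ b = (G ** cov_mat ?N t r ** transpose G) $ a $ b" .
  qed
qed

theorem mainTheorem6:
  fixes G Gt :: "real^'d^'k"
    and p pt :: "'d slgp"
    and C T :: nat
  assumes "CARD('d) \<le> CARD('k)"
    and "C \<ge> 1" and "T \<ge> 1"
    and "rank G = CARD('d)" and "rank Gt = CARD('d)"
    and "valid_slgp C p" and "valid_slgp C pt"
    and "obs_law C T G p = obs_law C T Gt pt"
    and "\<forall>i. cov_mat (source_law C T p) 1 1 $ i $ i > 0"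
    and "\<exists>t0\<in>{1..T}. \<exists>l0<t0.
           inj (\<lambda>i. (inv_sqrt (cov_mat (source_law C T p) 1 1)
                     ** cov_mat (source_law C T p) t0 (t0 - l0)
                     ** inv_sqrt (cov_mat (source_law C T p) 1 1)) $ i $ i)"
  shows "\<exists>P D :: real^'d^'d. permutation_matrix P \<and> diagonal_mat D \<and> invertible D \<and>
           Gt = G ** P ** matrix_inv D"
proof -
  note T = assms(3) and v = assms(6) and vt = assms(7) and obs = assms(8) and pos = assms(9)
  obtain t0 l0 where t0: "t0 \<in> {1..T}" and l0: "l0 < t0" and
    inj0: "inj (\<lambda>i. (inv_sqrt (cov_mat (source_law C T p) 1 1)
                     ** cov_mat (source_law C T p) t0 (t0 - l0)
                     ** inv_sqrt (cov_mat (source_law C T p) 1 1)) $ i $ i)"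
    using assms(10) by blast
  define r where "r = t0 - l0"
  have r: "r \<in> {1..T}" using t0 l0 unfolding r_def by auto
  have one: "(1::nat) \<in> {1..T}" using T by simp
  define S where "S = cov_mat (source_law C T p) 1 1"
  define L where "L = cov_mat (source_law C T p) t0 r"
  define St where "St = cov_mat (source_law C T pt) 1 1"
  define Lt where "Lt = cov_mat (source_law C T pt) t0 r"
  have dS: "\<forall>i j. i \<noteq> j \<longrightarrow> S$i$j = 0" unfolding S_def by (rule cov_diag[OF v T one one])
  have dL: "\<forall>i j. i \<noteq> j \<longrightarrow> L$i$j = 0" unfolding L_def by (rule cov_diag[OF v T t0 r])
  have dSt: "\<forall>i j. i \<noteq> j \<longrightarrow> St$i$j = 0" unfolding St_def by (rule cov_diag[OF vt T one one])
  have dLt: "\<forall>i j. i \<noteq> j \<longrightarrow> Lt$i$j = 0" unfolding Lt_def by (rule cov_diag[OF vt T t0 r])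
  have posS: "\<forall>i. S$i$i > 0" using pos unfolding S_def .
  have eqS: "G ** S ** transpose G = Gt ** St ** transpose Gt"
    unfolding S_def St_def using obs_cov[OF v T one one, of G] obs_cov[OF vt T one one, of Gt] obs by simp
  have eqL: "G ** L ** transpose G = Gt ** Lt ** transpose Gt"
    unfolding L_def Lt_def using obs_cov[OF v T t0 r, of G] obs_cov[OF vt T t0 r, of Gt] obs by simp
  define Q :: "real^'d^'d" where "Q = (\<chi> i j. if i = j then sqrt (S$i$i) else 0)"
  define Qi :: "real^'d^'d" where "Qi = (\<chi> i j. if i = j then 1 / sqrt (S$i$i) else 0)"
  have dQ: "\<forall>i j. i \<noteq> j \<longrightarrow> Q$i$j = 0" by (simp add: Q_def)
  have dQi: "\<forall>i j. i \<noteq> j \<longrightarrow> Qi$i$j = 0" by (simp add: Qi_def)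
  have ps: "psd_sqrt S = Q" unfolding Q_def by (rule psd_sqrt_diag[OF dS posS])
  have QQi: "Q ** Qi = mat 1" "Qi ** Q = mat 1"
    using posS unfolding vec_eq_iff diag_mult_entry(1)[OF dQ] diag_mult_entry(1)[OF dQi]
    by (auto simp: Q_def Qi_def mat_def) (metis less_irrefl real_sqrt_gt_0_iff)+
  have isq: "inv_sqrt S = Qi" unfolding inv_sqrt_def ps by (rule matrix_inv_eqI[OF QQi])
  have diagval: "(Qi ** L ** Qi)$i$i = L$i$i / S$i$i" for i
  proof -
    have "(Qi ** L ** Qi)$i$i = Qi$i$i * L$i$i * Qi$i$i"
      unfolding diag_mult_entry(2)[OF dQi] diag_mult_entry(1)[OF dQi] ..
    also have "\<dots> = L$i$i / (sqrt (S$i$i) * sqrt (S$i$i))" by (simp add: Qi_def)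
    also have "\<dots> = L$i$i / S$i$i" using posS[rule_format, of i] by simp
    finally show ?thesis .
  qed
  have injl: "inj (\<lambda>i. L$i$i / S$i$i)"
    using inj0 unfolding S_def[symmetric] r_def[symmetric] L_def[symmetric] isq diagval .
  show ?thesis
    by (rule monomial_core[OF assms(4) assms(5) dS dL dSt dLt posS injl eqS eqL])
qed

end
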